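(* Let $X_1, X_2, \ldots$ be i.i.d.\ random variables with $\mathbb{P}\{X_1 = 2^k\} = 2^{-k}$, $k \in \mathbb{N}=\{1,2,\ldots\}$. For $m \geq 1$ let $S_m = X_1 + \cdots + X_m$ and set $S_0 = 0$. For $n \geq 1$ let $X_{1n} \geq X_{2n} \geq \cdots \geq X_{nn}$ be the decreasing rearrangement of $X_1,\ldots,X_n$, and for $0 \leq r < n$ let $S_{n,r} = \sum_{k=r+1}^n X_{kn}$. Then for any integers $0 \leq r < n$, as $x \to \infty$, \[ \mathbb{P}\{ S_{n,r} > x\} \sim \frac{2^{(r+1)\{\log_2 x\}}}{x^{r+1}} \binom{n}{r+1} \left( 1 + \mathbb{P}\left\{ S_{n-r-1} > x\left(1 - 2^{-\{\log_2 x\}}\right)\right\} (2^{r+1}-1) \right). \] In particular, for any $0 < \delta < 1$, \[ \lim_{x \to \infty,\ \{\log_2 x\} > \delta} \mathbb{P}\{S_{n,r} > x\} \frac{x^{r+1}}{2^{(r+1)\{\log_2 x\}}} = \binom{n}{r+1}. \]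
   Context: $\{y\}$ denotes the fractional part of a real number $y$. The notation $f(x) \sim g(x)$ means $f(x)/g(x) \to 1$. $S_{n,r}$ is the $r$-trimmed sum (the sum with the $r$ largest observations removed); $S_{n,0} = S_n$. *)

theory Defs
  imports "HOL-Probability.Probability" "HOL-Library.Landau_Symbols"
begin

definition partial_sum :: "(nat \<Rightarrow> 'a \<Rightarrow> real) \<Rightarrow> nat \<Rightarrow> 'a \<Rightarrow> real" where
  "partial_sum X m \<omega> = (\<Sum>i\<in>{1..m}. X i \<omega>)"

definition decr_rearr :: "(nat \<Rightarrow> 'a \<Rightarrow> real) \<Rightarrow> nat \<Rightarrow> 'a \<Rightarrow> real list" where
  "decr_rearr X n \<omega> = rev (sort (map (\<lambda>i. X i \<omega>) [1..<n+1]))"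

definition trimmed_sum :: "(nat \<Rightarrow> 'a \<Rightarrow> real) \<Rightarrow> nat \<Rightarrow> nat \<Rightarrow> 'a \<Rightarrow> real" where
  "trimmed_sum X n r \<omega> = (\<Sum>k\<in>{r+1..n}. decr_rearr X n \<omega> ! (k - 1))"

end

theory Submission
  imports Defs "HOL-Combinatorics.Permutations"
begin

lemma dec_sum:
  fixes g :: "nat \<Rightarrow> real"
  assumes dec: "\<And>a b. a \<le> b \<Longrightarrow> b < n \<Longrightarrow> g b \<le> g a" and P: "P \<subseteq> {..<n}" "card P = r"
  shows "sum g P \<le> sum g {..<r}"
proof (cases "r = 0")
  case True
  then have "P = {}" using P finite_subset by (metis card_0_eq finite_lessThan)
  then show ?thesis using True by simp
next
  case False
  have fin: "finite P" using P(1) finite_subset by blast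
  have "card P \<le> card {..<n}" by (rule card_mono[OF _ P(1)]) simp
  then have rn: "r \<le> n" using P by simp
  let ?c = "g (r-1)"
  have s1: "sum g P = sum g (P \<inter> {..<r}) + sum g (P - {..<r})" by (rule sum.Int_Diff[OF fin])
  have s2: "sum g {..<r} = sum g ({..<r} \<inter> P) + sum g ({..<r} - P)" by (rule sum.Int_Diff) simp
  have c1: "card ({..<r} - P) = card (P - {..<r})"
    using card_Diff_subset_Int[of "{..<r}" P] card_Diff_subset_Int[of P "{..<r}"] fin P(2)
    by (simp add: Int_commute)
  have b1: "sum g (P - {..<r}) \<le> card (P - {..<r}) * ?c"
    by (rule sum_bounded_above) (use P dec in auto)
  have b2: "card ({..<r} - P) * ?c \<le> sum g ({..<r} - P)"
    by (rule sum_bounded_below) (use rn dec False in auto)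
  show ?thesis using s1 s2 b1 b2 c1 by (simp add: Int_commute)
qed

lemma trimmed_char:
  assumes rn: "r \<le> n"
  shows "x < trimmed_sum X n r \<omega> \<longleftrightarrow> (\<forall>T. T \<subseteq> {1..n} \<longrightarrow> card T = r \<longrightarrow> x < (\<Sum>i\<in>{1..n}-T. X i \<omega>))"
proof -
  define xs where "xs = map (\<lambda>i. X i \<omega>) [1..<n+1]"
  define ys where "ys = rev (sort xs)"
  have len: "length xs = n" "length ys = n" by (simp_all add: xs_def ys_def)
  have "mset ys = mset xs" by (simp add: ys_def)
  then obtain p where p: "p permutes {..<length xs}" "permute_list p xs = ys"
    by (rule mset_eq_permutation)
  define h where "h k = Suc (p k)" for k
  have ysk: "ys ! k = X (h k) \<omega>" if "k < n" for k
  proof -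
    have "p k < n" using permutes_in_image[OF p(1), of k] that len by simp
    have "ys ! k = xs ! (p k)" using p that len permute_list_nth[OF p(1), of k] by simp
    also have "\<dots> = X (Suc (p k)) \<omega>" unfolding xs_def using \<open>p k < n\<close> by (subst nth_map) (auto simp del: upt_Suc)
    finally show ?thesis unfolding h_def .
  qed
  have bp: "bij_betw p {..<n} {..<n}" using permutes_imp_bij[OF p(1)] len by simp
  have bS: "bij_betw Suc {..<n} {1..n}"
    by (simp add: bij_betw_def image_Suc_lessThan)
  have bij: "bij_betw h {..<n} {1..n}"
    unfolding h_def using bij_betw_trans[OF bp bS] by (simp add: comp_def)
  have dec: "ys ! b \<le> ys ! a" if "a \<le> b" "b < n" for a b
  proof -
    have s: "sorted (sort xs)" by simp
    have "ys ! a = sort xs ! (n - Suc a)" "ys ! b = sort xs ! (n - Suc b)"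
      using that len by (simp_all add: ys_def rev_nth)
    then show ?thesis using sorted_nth_mono[OF s, of "n - Suc b" "n - Suc a"] that len by simp
  qed
  have sumh: "(\<Sum>k\<in>K. ys ! k) = (\<Sum>i\<in>h ` K. X i \<omega>)" if "K \<subseteq> {..<n}" for K
  proof -
    have "inj_on h K" by (rule inj_on_subset[OF bij_betw_imp_inj_on[OF bij] that])
    then have "(\<Sum>i\<in>h ` K. X i \<omega>) = (\<Sum>k\<in>K. X (h k) \<omega>)" by (rule sum.reindex[unfolded comp_def])
    also have "\<dots> = (\<Sum>k\<in>K. ys ! k)" using that ysk by (intro sum.cong) auto
    finally show ?thesis by simp
  qed
  define T0 where "T0 = h ` {..<r}"
  have T0: "T0 \<subseteq> {1..n}" "card T0 = r"
  proof -
    show "T0 \<subseteq> {1..n}" using bij rn unfolding T0_def bij_betw_def by auto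
    have "inj_on h {..<r}" by (rule inj_on_subset[OF bij_betw_imp_inj_on[OF bij]]) (use rn in auto)
    then show "card T0 = r" unfolding T0_def by (simp add: card_image)
  qed
  have ts: "trimmed_sum X n r \<omega> = (\<Sum>k\<in>{r..<n}. ys ! k)"
  proof -
    have "trimmed_sum X n r \<omega> = (\<Sum>k\<in>{Suc r..<Suc n}. ys ! (k - 1))"
      unfolding trimmed_sum_def decr_rearr_def ys_def xs_def
      by (intro sum.cong) auto
    also have "\<dots> = (\<Sum>k\<in>{r..<n}. ys ! k)" by (subst sum.shift_bounds_Suc_ivl) simp
    finally show ?thesis .
  qed
  have "h ` {r..<n} = {1..n} - T0"
  proof -
    have "h ` {..<n} = {1..n}" using bij by (simp add: bij_betw_def)
    moreover have "{..<n} = {..<r} \<union> {r..<n}" using rn by auto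
    moreover have "h ` {..<r} \<inter> h ` {r..<n} = {}"
      using bij_betw_imp_inj_on[OF bij] rn unfolding inj_on_def by (auto, metis lessThan_iff less_le_trans not_le order_less_imp_le)
    ultimately show ?thesis unfolding T0_def by auto
  qed
  then have ts2: "trimmed_sum X n r \<omega> = (\<Sum>i\<in>{1..n}-T0. X i \<omega>)"
    using ts sumh[of "{r..<n}"] by (simp add: subset_eq)
  have ge: "trimmed_sum X n r \<omega> \<le> (\<Sum>i\<in>{1..n}-T. X i \<omega>)" if T: "T \<subseteq> {1..n}" "card T = r" for T
  proof -
    define P where "P = {k\<in>{..<n}. h k \<in> T}"
    have hP: "h ` P = T" using bij T unfolding P_def bij_betw_def by auto
    have "inj_on h P" by (rule inj_on_subset[OF bij_betw_imp_inj_on[OF bij]]) (auto simp: P_def)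
    then have cP: "card P = r" using card_image[of h P] hP T by simp
    have "(\<Sum>i\<in>T. X i \<omega>) = (\<Sum>k\<in>P. ys ! k)" using sumh[of P] hP unfolding P_def by (auto simp: subset_eq)
    also have "\<dots> \<le> (\<Sum>k\<in>{..<r}. ys ! k)"
      by (rule dec_sum[where n=n]) (use dec cP in \<open>auto simp: P_def\<close>)
    also have "\<dots> = (\<Sum>i\<in>T0. X i \<omega>)" using sumh[of "{..<r}"] rn unfolding T0_def by auto
    finally have le: "(\<Sum>i\<in>T. X i \<omega>) \<le> (\<Sum>i\<in>T0. X i \<omega>)" .
    have "(\<Sum>i\<in>{1..n}-T. X i \<omega>) = (\<Sum>i\<in>{1..n}. X i \<omega>) - (\<Sum>i\<in>T. X i \<omega>)"
      using T by (simp add: sum_diff)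
    moreover have "(\<Sum>i\<in>{1..n}-T0. X i \<omega>) = (\<Sum>i\<in>{1..n}. X i \<omega>) - (\<Sum>i\<in>T0. X i \<omega>)"
      using T0 by (simp add: sum_diff)
    ultimately show ?thesis using le ts2 by simp
  qed
  show ?thesis
  proof
    assume "x < trimmed_sum X n r \<omega>"
    then show "\<forall>T. T \<subseteq> {1..n} \<longrightarrow> card T = r \<longrightarrow> x < (\<Sum>i\<in>{1..n}-T. X i \<omega>)"
    proof (intro allI impI)
      fix T assume "T \<subseteq> {1..n}" "card T = r"
      from ge[OF this] show "x < (\<Sum>i\<in>{1..n}-T. X i \<omega>)" using \<open>x < trimmed_sum X n r \<omega>\<close> by linarith
    qed
  next
    assume "\<forall>T. T \<subseteq> {1..n} \<longrightarrow> card T = r \<longrightarrow> x < (\<Sum>i\<in>{1..n}-T. X i \<omega>)"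
    then show "x < trimmed_sum X n r \<omega>" using T0 ts2 by auto
  qed
qed

locale pw = prob_space M for M :: "'a measure" +
  fixes X :: "nat \<Rightarrow> 'a \<Rightarrow> real"
  assumes Xm: "\<And>i. i \<ge> 1 \<Longrightarrow> X i \<in> borel_measurable M"
  and ind: "indep_vars (\<lambda>_. borel) X {1..}"
  and pt: "\<And>i k. i \<ge> 1 \<Longrightarrow> k \<ge> 1 \<Longrightarrow> prob {\<omega> \<in> space M. X i \<omega> = 2^k} = 1/2^k"
begin

lemma tail_pow_aux:
  assumes i: "i \<ge> 1" and j: "j \<ge> 1"
  shows "prob {\<omega>\<in>space M. \<exists>k\<ge>j. X i \<omega> = 2^k} = 2/2^j"
proof -
  have [measurable]: "X i \<in> borel_measurable M" using Xm i by auto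
  define A where "A k = {\<omega>\<in>space M. X i \<omega> = 2^(k+j)}" for k
  have "A k \<in> events" for k unfolding A_def by measurable
  then have "range A \<subseteq> events" by auto
  moreover have "disjoint_family A"
    unfolding disjoint_family_on_def A_def by auto
  ultimately have s: "(\<lambda>k. prob (A k)) sums prob (\<Union>k. A k)"
    by (rule finite_measure_UNION)
  have "(\<Union>k. A k) = {\<omega>\<in>space M. \<exists>k\<ge>j. X i \<omega> = 2^k}"
  proof (intro set_eqI iffI)
    fix \<omega> assume "\<omega> \<in> (\<Union>k. A k)"
    then obtain k where "\<omega> \<in> space M" "X i \<omega> = 2^(k+j)" unfolding A_def by auto
    then show "\<omega> \<in> {\<omega>\<in>space M. \<exists>k\<ge>j. X i \<omega> = 2^k}" by (intro CollectI conjI exI[of _ "k+j"]) auto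
  next
    fix \<omega> assume "\<omega> \<in> {\<omega>\<in>space M. \<exists>k\<ge>j. X i \<omega> = 2^k}"
    then obtain k where "\<omega> \<in> space M" "k \<ge> j" "X i \<omega> = 2^k" by auto
    then have "\<omega> \<in> A (k - j)" unfolding A_def by simp
    then show "\<omega> \<in> (\<Union>k. A k)" by blast
  qed
  moreover have "prob (A k) = (1/2^j) * (1/2)^k" for k
    unfolding A_def using pt[OF i, of "k+j"] j by (simp add: power_add power_divide)
  ultimately have s2: "(\<lambda>k. (1/2^j) * (1/2::real)^k) sums prob {\<omega>\<in>space M. \<exists>k\<ge>j. X i \<omega> = 2^k}"
    using s by simp
  have "(\<lambda>k. (1/2^j) * (1/2::real)^k) sums ((1/2^j) * 2)"
    using geometric_sums[of "1/2::real"] by (intro sums_mult) auto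
  from sums_unique2[OF s2 this] show ?thesis by simp
qed

lemma AE_pow: assumes "i \<ge> 1" shows "AE \<omega> in M. \<exists>k\<ge>1. X i \<omega> = 2^k"
proof -
  have "prob {\<omega>\<in>space M. \<exists>k\<ge>1. X i \<omega> = 2^k} = 1" using tail_pow_aux[of i 1] assms by simp
  from AE_prob_1[OF this] show ?thesis by auto
qed

lemma tail_pow:
  assumes i: "i \<ge> 1" and j: "j \<ge> 1"
  shows "prob {\<omega>\<in>space M. X i \<omega> \<ge> 2^j} = 2/2^j"
proof -
  have [measurable]: "X i \<in> borel_measurable M" using Xm i by auto
  have "prob {\<omega>\<in>space M. X i \<omega> \<ge> 2^j} = prob {\<omega>\<in>space M. \<exists>k\<ge>j. X i \<omega> = (2::real)^k}"
  proof (rule finite_measure_eq_AE)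
    show "AE \<omega> in M. (\<omega> \<in> {\<omega>\<in>space M. X i \<omega> \<ge> 2^j}) = (\<omega> \<in> {\<omega>\<in>space M. \<exists>k\<ge>j. X i \<omega> = (2::real)^k})"
      using AE_pow[OF i] by eventually_elim (auto)
  qed measurable
  then show ?thesis using tail_pow_aux[OF i j] by simp
qed

lemma Xmeas: "i \<ge> 1 \<Longrightarrow> X i \<in> borel_measurable M" using Xm by auto

lemma prod_indep:
  assumes J: "finite J" "J \<subseteq> {1..}" and A: "\<And>i. i \<in> J \<Longrightarrow> A i \<in> sets borel"
  shows "prob {\<omega>\<in>space M. \<forall>i\<in>J. X i \<omega> \<in> A i} = (\<Prod>i\<in>J. prob {\<omega>\<in>space M. X i \<omega> \<in> A i})"
proof (cases "J = {}")
  case True then show ?thesis using prob_space by simp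
next
  case False
  have "prob (\<Inter>i\<in>J. X i -` A i \<inter> space M) = (\<Prod>i\<in>J. prob (X i -` A i \<inter> space M))"
    by (rule indep_varsD[OF ind False J(1) J(2) A])
  moreover have "(\<Inter>i\<in>J. X i -` A i \<inter> space M) = {\<omega>\<in>space M. \<forall>i\<in>J. X i \<omega> \<in> A i}" using False by auto
  moreover have "X i -` A i \<inter> space M = {\<omega>\<in>space M. X i \<omega> \<in> A i}" for i by auto
  ultimately show ?thesis by simp
qed

lemma law_sums:
  assumes i: "i \<ge> 1" and A: "A \<in> sets borel"
  shows "(\<lambda>k. if (2::real)^(k+1) \<in> A then 1/2^(k+1) else 0) sums prob {\<omega>\<in>space M. X i \<omega> \<in> A}"
proof -
  have [measurable]: "X i \<in> borel_measurable M" using Xm i by auto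
  have [measurable]: "A \<in> sets borel" by (rule A)
  define B where "B k = (if (2::real)^(k+1) \<in> A then {\<omega>\<in>space M. X i \<omega> = 2^(k+1)} else {})" for k
  have Bev: "B k \<in> events" for k unfolding B_def by (cases "(2::real)^(k+1) \<in> A") simp_all
  then have "range B \<subseteq> events" by auto
  moreover have "disjoint_family B"
    unfolding disjoint_family_on_def B_def by auto
  ultimately have s: "(\<lambda>k. prob (B k)) sums prob (\<Union>k. B k)"
    by (rule finite_measure_UNION)
  have pB: "prob (B k) = (if (2::real)^(k+1) \<in> A then 1/2^(k+1) else 0)" for k
    unfolding B_def using pt[OF i, of "k+1"] by simp
  have "prob (\<Union>k. B k) = prob {\<omega>\<in>space M. X i \<omega> \<in> A}"
  proof (rule finite_measure_eq_AE)
    show "AE \<omega> in M. (\<omega> \<in> (\<Union>k. B k)) = (\<omega> \<in> {\<omega>\<in>space M. X i \<omega> \<in> A})"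
      using AE_pow[OF i]
    proof eventually_elim
      case (elim \<omega>)
      then obtain k where k: "k \<ge> 1" "X i \<omega> = 2^k" by auto
      then have k': "X i \<omega> = 2^((k-1)+1)" by simp
      show ?case
      proof
        assume "\<omega> \<in> (\<Union>k. B k)" then show "\<omega> \<in> {\<omega>\<in>space M. X i \<omega> \<in> A}"
          unfolding B_def by (auto split: if_splits)
      next
        assume "\<omega> \<in> {\<omega>\<in>space M. X i \<omega> \<in> A}" then have "\<omega> \<in> B (k-1)"
          unfolding B_def using k' by auto
        then show "\<omega> \<in> (\<Union>k. B k)" by blast
      qed
    qed
    show "(\<Union>k. B k) \<in> events" using Bev by auto
  qed measurable
  then show ?thesis using s pB by simp
qed

lemma distr_eq: assumes "i \<ge> 1" shows "distr M borel (X i) = distr M borel (X 1)"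
proof (rule measure_eqI)
  fix A :: "real set" assume A: "A \<in> sets (distr M borel (X i))"
  then have A': "A \<in> sets borel" by simp
  have "prob {\<omega>\<in>space M. X i \<omega> \<in> A} = prob {\<omega>\<in>space M. X 1 \<omega> \<in> A}"
    using sums_unique2[OF law_sums[OF assms A'] law_sums[of 1, OF _ A']] by simp
  moreover have "X i -` A \<inter> space M = {\<omega>\<in>space M. X i \<omega> \<in> A}" "X 1 -` A \<inter> space M = {\<omega>\<in>space M. X 1 \<omega> \<in> A}" by auto
  ultimately show "emeasure (distr M borel (X i)) A = emeasure (distr M borel (X 1)) A"
    using A' Xmeas[OF assms] Xmeas[of 1] by (simp add: emeasure_distr emeasure_eq_measure)
qed simp

lemma joint_law:
  assumes J: "finite J" "J \<subseteq> {1..}" "J \<noteq> {}"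
  shows "distr M (PiM J (\<lambda>_. borel)) (\<lambda>\<omega>. \<lambda>i\<in>J. X i \<omega>) = PiM J (\<lambda>_. distr M borel (X 1))"
proof -
  have ij: "indep_vars (\<lambda>_. borel) X J" by (rule indep_vars_subset[OF ind J(2)])
  have "distr M (PiM J (\<lambda>_. borel)) (\<lambda>\<omega>. \<lambda>i\<in>J. X i \<omega>) = PiM J (\<lambda>i. distr M borel (X i))"
  proof -
    have rv: "\<And>i. i \<in> J \<Longrightarrow> random_variable borel (X i)" using J Xmeas by auto
    show ?thesis using indep_vars_iff_distr_eq_PiM'[where I=J and M'="\<lambda>_. borel" and X=X, OF J(3) rv] ij by simp
  qed
  also have "\<dots> = PiM J (\<lambda>_. distr M borel (X 1))"
  proof (rule PiM_cong)
    fix i assume "i \<in> J" then have "i \<ge> 1" using J by auto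
    then show "distr M borel (X i) = distr M borel (X 1)" by (rule distr_eq)
  qed simp
  finally show ?thesis .
qed

lemma sum_law_PiM:
  assumes J: "finite J" "J \<subseteq> {1..}" "J \<noteq> {}"
  shows "prob {\<omega>\<in>space M. y < (\<Sum>i\<in>J. X i \<omega>)} =
    measure (PiM J (\<lambda>_. distr M borel (X 1))) {f\<in>space (PiM J (\<lambda>_. borel)). y < (\<Sum>i\<in>J. f i)}"
proof -
  have mX: "(\<lambda>\<omega>. \<lambda>i\<in>J. X i \<omega>) \<in> measurable M (PiM J (\<lambda>_. borel))"
    using J Xmeas by (intro measurable_restrict) auto
  have S: "{f\<in>space (PiM J (\<lambda>_. borel)). y < (\<Sum>i\<in>J. f i)} \<in> sets (PiM J (\<lambda>_. borel))"
    by measurable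
  have "(\<lambda>\<omega>. \<lambda>i\<in>J. X i \<omega>) -` {f\<in>space (PiM J (\<lambda>_. borel)). y < (\<Sum>i\<in>J. f i)} \<inter> space M
      = {\<omega>\<in>space M. y < (\<Sum>i\<in>J. X i \<omega>)}"
    by (auto simp: space_PiM)
  then show ?thesis
    using measure_distr[OF mX S] joint_law[OF J] by simp
qed

lemma sum_law:
  assumes J: "finite J" "J \<subseteq> {1..}" "card J = k"
  shows "prob {\<omega>\<in>space M. y < (\<Sum>i\<in>J. X i \<omega>)} = prob {\<omega>\<in>space M. y < (\<Sum>i\<in>{1..k}. X i \<omega>)}"
proof (cases "k = 0")
  case True then show ?thesis using J by simp
next
  case False
  define \<mu> where "\<mu> = distr M borel (X 1)"
  have p\<mu>: "prob_space \<mu>" unfolding \<mu>_def using Xmeas[of 1] by (intro prob_space_distr) auto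
  have Jne: "J \<noteq> {}" using False J by auto
  obtain h where h: "bij_betw h {1..k} J" using finite_same_card_bij[of "{1..k}" J] J by auto
  have hJ: "inj_on h {1..k}" "h \<in> {1..k} \<rightarrow> J" using h by (auto simp: bij_betw_def)
  have re: "distr (PiM J (\<lambda>_. \<mu>)) (PiM {1..k} (\<lambda>_. \<mu>)) (\<lambda>\<omega>. \<lambda>n\<in>{1..k}. \<omega> (h n)) = PiM {1..k} (\<lambda>_. \<mu>)"
    using distr_PiM_reindex[of J "\<lambda>_. \<mu>" h "{1..k}"] p\<mu> hJ by simp
  have mre: "(\<lambda>\<omega>. \<lambda>n\<in>{1..k}. \<omega> (h n)) \<in> measurable (PiM J (\<lambda>_. \<mu>)) (PiM {1..k} (\<lambda>_. \<mu>))"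
    using hJ by (intro measurable_restrict measurable_component_singleton) auto
  define S1 where "S1 = {f\<in>space (PiM {1..k} (\<lambda>_. borel)). y < (\<Sum>i\<in>{1..k}. f i)}"
  define SJ where "SJ = {f\<in>space (PiM J (\<lambda>_. borel)). y < (\<Sum>i\<in>J. f i)}"
  have S1m: "S1 \<in> sets (PiM {1..k} (\<lambda>_. \<mu>))"
  proof -
    have "S1 \<in> sets (PiM {1..k} (\<lambda>_. borel))" unfolding S1_def by measurable
    moreover have "sets (PiM {1..k} (\<lambda>_. \<mu>)) = sets (PiM {1..k} (\<lambda>_. borel))"
      unfolding \<mu>_def by (intro sets_PiM_cong) auto
    ultimately show ?thesis by simp
  qed
  have "(\<lambda>\<omega>. \<lambda>n\<in>{1..k}. \<omega> (h n)) -` S1 \<inter> space (PiM J (\<lambda>_. \<mu>)) = SJ"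
  proof -
    have "(\<Sum>n\<in>{1..k}. f (h n)) = (\<Sum>i\<in>J. f i)" for f :: "nat \<Rightarrow> real"
      using sum.reindex_bij_betw[OF h, of f] by simp
    then show ?thesis unfolding S1_def SJ_def using hJ
      by (auto simp: space_PiM \<mu>_def Pi_iff)
  qed
  then have "measure (PiM {1..k} (\<lambda>_. \<mu>)) S1 = measure (PiM J (\<lambda>_. \<mu>)) SJ"
    using measure_distr[OF mre S1m] re by simp
  moreover have "{1..k} \<subseteq> {1::nat..}" "{1..k} \<noteq> {}" using False by auto
  ultimately show ?thesis
    using sum_law_PiM[OF J(1,2) Jne, of y] sum_law_PiM[of "{1..k}" y] unfolding S1_def SJ_def \<mu>_def
    by simp
qed

lemma indep_groups:
  assumes J: "J1 \<subseteq> {1..}" "J2 \<subseteq> {1..}" "J1 \<inter> J2 = {}"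
    and A: "A \<in> sets (PiM J1 (\<lambda>_. borel))" and B: "B \<in> sets (PiM J2 (\<lambda>_. borel))"
  shows "prob {\<omega>\<in>space M. (\<lambda>i\<in>J1. X i \<omega>) \<in> A \<and> (\<lambda>i\<in>J2. X i \<omega>) \<in> B}
       = prob {\<omega>\<in>space M. (\<lambda>i\<in>J1. X i \<omega>) \<in> A} * prob {\<omega>\<in>space M. (\<lambda>i\<in>J2. X i \<omega>) \<in> B}"
proof -
  define K where "K b = (if b then J1 else J2)" for b
  have iv: "indep_vars (\<lambda>b. PiM (K b) (\<lambda>_. borel)) (\<lambda>b \<omega>. restrict (\<lambda>i. X i \<omega>) (K b)) UNIV"
    by (rule indep_vars_restrict[OF ind]) (use J in \<open>auto simp: K_def disjoint_family_on_def\<close>)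
  define AB where "AB b = (if b then A else B)" for b
  have "prob (\<Inter>b\<in>UNIV. (\<lambda>\<omega>. restrict (\<lambda>i. X i \<omega>) (K b)) -` AB b \<inter> space M)
     = (\<Prod>b\<in>UNIV. prob ((\<lambda>\<omega>. restrict (\<lambda>i. X i \<omega>) (K b)) -` AB b \<inter> space M))"
    by (rule indep_varsD[OF iv]) (use A B in \<open>auto simp: AB_def K_def\<close>)
  moreover have "(\<Inter>b\<in>UNIV. (\<lambda>\<omega>. restrict (\<lambda>i. X i \<omega>) (K b)) -` AB b \<inter> space M)
      = {\<omega>\<in>space M. (\<lambda>i\<in>J1. X i \<omega>) \<in> A \<and> (\<lambda>i\<in>J2. X i \<omega>) \<in> B}"
    by (auto simp: AB_def K_def all_bool_eq)
  moreover have "(\<lambda>\<omega>. restrict (\<lambda>i. X i \<omega>) (K True)) -` AB True \<inter> space M = {\<omega>\<in>space M. (\<lambda>i\<in>J1. X i \<omega>) \<in> A}"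
    "(\<lambda>\<omega>. restrict (\<lambda>i. X i \<omega>) (K False)) -` AB False \<inter> space M = {\<omega>\<in>space M. (\<lambda>i\<in>J2. X i \<omega>) \<in> B}"
    by (auto simp: AB_def K_def)
  ultimately show ?thesis by (simp add: UNIV_bool)
qed

end

context pw begin

lemma Xmeas': "i \<in> J \<Longrightarrow> J \<subseteq> {1..} \<Longrightarrow> X i \<in> borel_measurable M" using Xmeas by auto

lemma tail_lt:
  assumes i: "i \<ge> 1" and j: "j \<ge> 1"
  shows "prob {\<omega>\<in>space M. X i \<omega> < 2^j} = 1 - 2/2^j"
proof -
  have [measurable]: "X i \<in> borel_measurable M" using Xmeas i .
  have ev: "{\<omega>\<in>space M. X i \<omega> \<ge> 2^j} \<in> events" by measurable
  have "{\<omega>\<in>space M. X i \<omega> < 2^j} = space M - {\<omega>\<in>space M. X i \<omega> \<ge> 2^j}" by auto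
  then show ?thesis using prob_compl[OF ev] tail_pow[OF i j] by simp
qed

lemma prob_all_ge:
  assumes J: "finite J" "J \<subseteq> {1..}" and j: "j \<ge> 1"
  shows "prob {\<omega>\<in>space M. \<forall>i\<in>J. X i \<omega> \<ge> 2^j} = (2/2^j)^card J"
proof -
  have "prob {\<omega>\<in>space M. \<forall>i\<in>J. X i \<omega> \<in> {2^j..}} = (\<Prod>i\<in>J. prob {\<omega>\<in>space M. X i \<omega> \<in> {2^j..}})"
    by (rule prod_indep[OF J]) simp
  also have "\<dots> = (\<Prod>i\<in>J. 2/2^j)" using J tail_pow[OF _ j] by (intro prod.cong) auto
  finally show ?thesis by simp
qed

lemma prob_D:
  assumes I: "finite I" "I \<subseteq> {1..}" and T: "T \<subseteq> I" and j: "j \<ge> 1"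
  shows "prob {\<omega>\<in>space M. (\<forall>i\<in>T. X i \<omega> \<ge> 2^j) \<and> (\<forall>i\<in>I-T. X i \<omega> < 2^j)}
       = (2/2^j)^card T * (1 - 2/2^j)^card (I-T)"
proof -
  define A where "A i = (if i \<in> T then {2^j..} else {..<(2::real)^j})" for i
  have "{\<omega>\<in>space M. (\<forall>i\<in>T. X i \<omega> \<ge> 2^j) \<and> (\<forall>i\<in>I-T. X i \<omega> < 2^j)} = {\<omega>\<in>space M. \<forall>i\<in>I. X i \<omega> \<in> A i}"
    using T unfolding A_def by auto
  moreover have "prob {\<omega>\<in>space M. \<forall>i\<in>I. X i \<omega> \<in> A i} = (\<Prod>i\<in>I. prob {\<omega>\<in>space M. X i \<omega> \<in> A i})"
    by (rule prod_indep[OF I]) (simp add: A_def)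
  moreover have "(\<Prod>i\<in>I. prob {\<omega>\<in>space M. X i \<omega> \<in> A i}) = (\<Prod>i\<in>I. if i \<in> T then 2/2^j else 1 - 2/2^j)"
    using I tail_pow[OF _ j] tail_lt[OF _ j] by (intro prod.cong) (auto simp: A_def)
  moreover have "(\<Prod>i\<in>I. if i \<in> T then 2/2^j else 1 - 2/2^j) = (2/2^j)^card T * (1 - 2/(2::real)^j)^card (I-T)"
  proof -
    have "I \<inter> {x. x \<in> T} = T" "I \<inter> - {x. x \<in> T} = I - T" using T by auto
    then show ?thesis by (simp add: prod.If_cases[OF I(1)])
  qed
  ultimately show ?thesis by simp
qed

lemma prob_E:
  assumes I: "finite I" "I \<subseteq> {1..}" and T: "T \<subseteq> I" and m: "m \<ge> 1"
  shows "prob {\<omega>\<in>space M. (\<forall>i\<in>T. X i \<omega> \<ge> 2^m) \<and> \<not>(\<forall>i\<in>T. X i \<omega> \<ge> 2^(m+1)) \<and>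
            (\<forall>i\<in>I-T. X i \<omega> < 2^m) \<and> y < (\<Sum>i\<in>I-T. X i \<omega>)}
   = ((2/2^m)^card T - (2/2^(m+1))^card T) *
      prob {\<omega>\<in>space M. (\<forall>i\<in>I-T. X i \<omega> < 2^m) \<and> y < (\<Sum>i\<in>I-T. X i \<omega>)}"
proof -
  define A where "A = {f\<in>space (PiM T (\<lambda>_. borel)). (\<forall>i\<in>T. f i \<ge> (2::real)^m) \<and> \<not>(\<forall>i\<in>T. f i \<ge> 2^(m+1))}"
  define B where "B = {f\<in>space (PiM (I-T) (\<lambda>_. borel)). (\<forall>i\<in>I-T. f i < (2::real)^m) \<and> y < (\<Sum>i\<in>I-T. f i)}"
  have fT: "finite T" "finite (I-T)" using I T finite_subset by auto
  have Am: "A \<in> sets (PiM T (\<lambda>_. borel))" unfolding A_def using fT by measurable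
  have Bm: "B \<in> sets (PiM (I-T) (\<lambda>_. borel))" unfolding B_def using fT by measurable
  have TJ: "T \<subseteq> {1..}" "I - T \<subseteq> {1..}" "T \<inter> (I - T) = {}" using I T by auto
  note ig = indep_groups[OF TJ Am Bm]
  have e1: "{\<omega>\<in>space M. (\<lambda>i\<in>T. X i \<omega>) \<in> A \<and> (\<lambda>i\<in>I-T. X i \<omega>) \<in> B} =
     {\<omega>\<in>space M. (\<forall>i\<in>T. X i \<omega> \<ge> 2^m) \<and> \<not>(\<forall>i\<in>T. X i \<omega> \<ge> 2^(m+1)) \<and>
            (\<forall>i\<in>I-T. X i \<omega> < 2^m) \<and> y < (\<Sum>i\<in>I-T. X i \<omega>)}"
    by (auto simp: A_def B_def space_PiM)
  have e2: "{\<omega>\<in>space M. (\<lambda>i\<in>T. X i \<omega>) \<in> A} =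
      {\<omega>\<in>space M. \<forall>i\<in>T. X i \<omega> \<ge> 2^m} - {\<omega>\<in>space M. \<forall>i\<in>T. X i \<omega> \<ge> 2^(m+1)}"
    by (auto simp: A_def space_PiM)
  have e3: "{\<omega>\<in>space M. (\<lambda>i\<in>I-T. X i \<omega>) \<in> B} =
     {\<omega>\<in>space M. (\<forall>i\<in>I-T. X i \<omega> < 2^m) \<and> y < (\<Sum>i\<in>I-T. X i \<omega>)}"
    by (auto simp: B_def space_PiM)
  have [measurable]: "\<And>i. i \<in> T \<Longrightarrow> X i \<in> borel_measurable M" using Xmeas' TJ by auto
  have "prob ({\<omega>\<in>space M. \<forall>i\<in>T. X i \<omega> \<ge> 2^m} - {\<omega>\<in>space M. \<forall>i\<in>T. X i \<omega> \<ge> 2^(m+1)})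
     = prob {\<omega>\<in>space M. \<forall>i\<in>T. X i \<omega> \<ge> 2^m} - prob {\<omega>\<in>space M. \<forall>i\<in>T. X i \<omega> \<ge> 2^(m+1)}"
  proof (rule finite_measure_Diff)
    show "{\<omega>\<in>space M. \<forall>i\<in>T. X i \<omega> \<ge> 2^(m+1)} \<subseteq> {\<omega>\<in>space M. \<forall>i\<in>T. X i \<omega> \<ge> 2^m}"
    proof safe
      fix \<omega> i assume a: "\<forall>i\<in>T. X i \<omega> \<ge> 2^(m+1)" "i \<in> T"
      have "(2::real)^m \<le> 2^(m+1)" by (rule power_increasing) auto
      moreover have "X i \<omega> \<ge> 2^(m+1)" using a by blast
      ultimately show "X i \<omega> \<ge> 2^m" by linarith
    qed
  next
    show "{\<omega>\<in>space M. \<forall>i\<in>T. X i \<omega> \<ge> 2^m} \<in> events" using fT by measurable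
  next
    show "{\<omega>\<in>space M. \<forall>i\<in>T. X i \<omega> \<ge> 2^(m+1)} \<in> events" using fT by measurable
  qed
  also have "\<dots> = (2/2^m)^card T - (2/2^(m+1))^card T"
    using prob_all_ge[OF fT(1) TJ(1) m] prob_all_ge[OF fT(1) TJ(1), of "m+1"] by simp
  finally have pA: "prob {\<omega>\<in>space M. (\<lambda>i\<in>T. X i \<omega>) \<in> A} = (2/2^m)^card T - (2/2^(m+1))^card T"
    unfolding e2 .
  show ?thesis unfolding e1[symmetric] ig pA e3 ..
qed

lemma q_bounds:
  assumes J: "finite J" "J \<subseteq> {1..}" and m: "m \<ge> 1"
  shows "prob {\<omega>\<in>space M. (\<forall>i\<in>J. X i \<omega> < 2^m) \<and> y < (\<Sum>i\<in>J. X i \<omega>)} \<le> prob {\<omega>\<in>space M. y < (\<Sum>i\<in>J. X i \<omega>)}"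
    and "prob {\<omega>\<in>space M. y < (\<Sum>i\<in>J. X i \<omega>)} - card J * (2/2^m) \<le> prob {\<omega>\<in>space M. (\<forall>i\<in>J. X i \<omega> < 2^m) \<and> y < (\<Sum>i\<in>J. X i \<omega>)}"
proof -
  have [measurable]: "\<And>i. i \<in> J \<Longrightarrow> X i \<in> borel_measurable M" using Xmeas' J by auto
  show "prob {\<omega>\<in>space M. (\<forall>i\<in>J. X i \<omega> < 2^m) \<and> y < (\<Sum>i\<in>J. X i \<omega>)} \<le> prob {\<omega>\<in>space M. y < (\<Sum>i\<in>J. X i \<omega>)}"
    by (rule finite_measure_mono) (use J in auto)
  have sub: "{\<omega>\<in>space M. y < (\<Sum>i\<in>J. X i \<omega>)} \<subseteq> {\<omega>\<in>space M. (\<forall>i\<in>J. X i \<omega> < 2^m) \<and> y < (\<Sum>i\<in>J. X i \<omega>)}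
      \<union> (\<Union>i\<in>J. {\<omega>\<in>space M. X i \<omega> \<ge> 2^m})" by auto
  have "prob {\<omega>\<in>space M. y < (\<Sum>i\<in>J. X i \<omega>)} \<le> prob ({\<omega>\<in>space M. (\<forall>i\<in>J. X i \<omega> < 2^m) \<and> y < (\<Sum>i\<in>J. X i \<omega>)}
      \<union> (\<Union>i\<in>J. {\<omega>\<in>space M. X i \<omega> \<ge> 2^m}))"
    by (rule finite_measure_mono[OF sub]) (use J in measurable)
  also have "\<dots> \<le> prob {\<omega>\<in>space M. (\<forall>i\<in>J. X i \<omega> < 2^m) \<and> y < (\<Sum>i\<in>J. X i \<omega>)}
      + prob (\<Union>i\<in>J. {\<omega>\<in>space M. X i \<omega> \<ge> 2^m})"
    by (rule measure_Un_le) (use J in measurable)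
  also have "prob (\<Union>i\<in>J. {\<omega>\<in>space M. X i \<omega> \<ge> 2^m}) \<le> (\<Sum>i\<in>J. prob {\<omega>\<in>space M. X i \<omega> \<ge> 2^m})"
    by (rule finite_measure_subadditive_finite) (use J in auto)
  also have "\<dots> = (\<Sum>i\<in>J. 2/2^m)" using J tail_pow[OF _ m] by (intro sum.cong) auto
  also have "\<dots> = card J * (2/2^m)" by simp
  finally show "prob {\<omega>\<in>space M. y < (\<Sum>i\<in>J. X i \<omega>)} - card J * (2/2^m) \<le> prob {\<omega>\<in>space M. (\<forall>i\<in>J. X i \<omega> < 2^m) \<and> y < (\<Sum>i\<in>J. X i \<omega>)}"
    by simp
qed

lemma tail_gen:
  assumes i: "i \<ge> 1" and t: "t > 0"
  shows "prob {\<omega>\<in>space M. X i \<omega> \<ge> t} \<le> 2/t"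
proof (cases "t \<le> 2")
  case True
  have "prob {\<omega>\<in>space M. X i \<omega> \<ge> t} \<le> 1" by (rule prob_le_1)
  also have "1 \<le> 2/t" using True t by (simp add: field_simps)
  finally show ?thesis .
next
  case False
  have [measurable]: "X i \<in> borel_measurable M" using Xmeas i .
  obtain N where N: "t < 2^N" using real_arch_pow[of 2 t] by auto
  define j where "j = (LEAST j. t \<le> (2::real)^j)"
  have j1: "t \<le> 2^j" unfolding j_def using LeastI[of "\<lambda>j. t \<le> (2::real)^j" N] N by auto
  have j0: "j \<ge> 1"
  proof (rule ccontr)
    assume "\<not> j \<ge> 1" then have "j = 0" by simp
    then show False using j1 False by simp
  qed
  have j2: "\<not> t \<le> 2^(j-1)"
    unfolding j_def by (rule not_less_Least) (use j0 in \<open>simp add: j_def\<close>)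
  have "prob {\<omega>\<in>space M. X i \<omega> \<ge> t} \<le> prob {\<omega>\<in>space M. X i \<omega> \<ge> 2^j}"
  proof (rule finite_measure_mono_AE)
    show "AE \<omega> in M. \<omega> \<in> {\<omega>\<in>space M. X i \<omega> \<ge> t} \<longrightarrow> \<omega> \<in> {\<omega>\<in>space M. X i \<omega> \<ge> 2^j}"
      using AE_pow[OF i]
    proof eventually_elim
      case (elim \<omega>)
      then obtain k where k: "X i \<omega> = 2^k" by auto
      show ?case
      proof
        assume "\<omega> \<in> {\<omega>\<in>space M. X i \<omega> \<ge> t}"
        then have tk: "t \<le> 2^k" "\<omega> \<in> space M" using k by auto
        have "(2::real)^(j-1) < 2^k" using tk(1) j2 by linarith
        then have "j - 1 < k" by (rule power_less_imp_less_exp[rotated]) simp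
        then have "j \<le> k" by simp
        then have "(2::real)^j \<le> 2^k" by (rule power_increasing) simp
        then show "\<omega> \<in> {\<omega>\<in>space M. X i \<omega> \<ge> 2^j}" using k tk(2) by simp
      qed
    qed
  next
    have "{\<omega>\<in>space M. X i \<omega> \<ge> 2^j} = X i -` {2^j..} \<inter> space M" by auto
    then show "{\<omega>\<in>space M. X i \<omega> \<ge> 2^j} \<in> events" using measurable_sets[OF Xmeas[OF i], of "{2^j..}"] by simp
  qed
  also have "\<dots> = 2/2^j" using tail_pow[OF i j0] .
  also have "\<dots> \<le> 2/t" using j1 t by (simp add: frac_le)
  finally show ?thesis .
qed

lemma sum_tail:
  assumes J: "finite J" "J \<subseteq> {1..}" and y: "y > 0"
  shows "prob {\<omega>\<in>space M. y < (\<Sum>i\<in>J. X i \<omega>)} \<le> 2 * card J ^ 2 / y"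
proof (cases "J = {}")
  case True then show ?thesis using y by simp
next
  case False
  have [measurable]: "\<And>i. i \<in> J \<Longrightarrow> X i \<in> borel_measurable M" using Xmeas' J by auto
  define c where "c = real (card J)"
  have c: "c > 0" using False J unfolding c_def by auto
  have sub: "{\<omega>\<in>space M. y < (\<Sum>i\<in>J. X i \<omega>)} \<subseteq> (\<Union>i\<in>J. {\<omega>\<in>space M. X i \<omega> \<ge> y/c})"
  proof safe
    fix \<omega> assume \<omega>: "\<omega> \<in> space M" "y < (\<Sum>i\<in>J. X i \<omega>)"
    show "\<omega> \<in> (\<Union>i\<in>J. {\<omega>\<in>space M. X i \<omega> \<ge> y/c})"
    proof (rule ccontr)
      assume "\<omega> \<notin> (\<Union>i\<in>J. {\<omega>\<in>space M. X i \<omega> \<ge> y/c})"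
      then have "\<forall>i\<in>J. X i \<omega> < y/c" using \<omega> by auto
      then have "(\<Sum>i\<in>J. X i \<omega>) < (\<Sum>i\<in>J. y/c)" using J False by (intro sum_strict_mono) auto
      also have "\<dots> = y" using c unfolding c_def by simp
      finally show False using \<omega> by simp
    qed
  qed
  have "prob {\<omega>\<in>space M. y < (\<Sum>i\<in>J. X i \<omega>)} \<le> prob (\<Union>i\<in>J. {\<omega>\<in>space M. X i \<omega> \<ge> y/c})"
    by (rule finite_measure_mono[OF sub]) (use J in measurable)
  also have "\<dots> \<le> (\<Sum>i\<in>J. prob {\<omega>\<in>space M. X i \<omega> \<ge> y/c})"
    by (rule finite_measure_subadditive_finite) (use J in auto)
  also have "\<dots> \<le> (\<Sum>i\<in>J. 2/(y/c))" using J y c by (intro sum_mono tail_gen) auto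
  also have "\<dots> = 2 * card J ^ 2 / y" using c unfolding c_def by (simp add: power2_eq_square field_simps)
  finally show ?thesis .
qed

end

lemma two_n_le: "2 * n \<le> (2::nat)^n" if "n \<ge> 1" for n
  using that
proof (induction n)
  case 0 then show ?case by simp
next
  case (Suc k)
  show ?case
  proof (cases "k = 0")
    case True then show ?thesis by simp
  next
    case False
    then have "2 * k \<le> 2^k" using Suc by simp
    moreover have "2^1 \<le> (2::nat)^k" using False by (intro power_increasing) auto
    ultimately show ?thesis by simp
  qed
qed

lemma extend_set:
  assumes "H \<subseteq> I" "finite I" "card H \<le> r" "r \<le> card I"
  obtains T where "H \<subseteq> T" "T \<subseteq> I" "card T = r"
proof -
  have fH: "finite H" using assms finite_subset by blast
  have "r - card H \<le> card (I - H)" using assms fH by (simp add: card_Diff_subset)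
  then obtain U where U: "U \<subseteq> I - H" "card U = r - card H" "finite U"
    by (rule obtain_subset_with_card_n)
  have "card (H \<union> U) = card H + card U" using U fH by (intro card_Un_disjoint) auto
  then have "card (H \<union> U) = r" using U assms by simp
  then show ?thesis using that[of "H \<union> U"] U assms by auto
qed

lemma pt_D:
  assumes rn: "r < n" and T: "T \<subseteq> {1..n}" "card T = r+1"
    and big: "\<forall>i\<in>T. X i \<omega> \<ge> t" and tx: "x < t" and pos: "\<forall>i\<in>{1..n}. X i \<omega> \<ge> 0"
  shows "x < trimmed_sum X n r \<omega>"
  unfolding trimmed_char[OF less_imp_le[OF rn]]
proof (intro allI impI)
  fix T' assume T': "T' \<subseteq> {1..n}" "card T' = r"
  have "\<not> T \<subseteq> T'"
  proof
    assume "T \<subseteq> T'"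
    then have "card T \<le> card T'" using T' finite_subset by (intro card_mono) auto
    then show False using T T' by simp
  qed
  then obtain i where i: "i \<in> T" "i \<notin> T'" by auto
  then have "i \<in> {1..n} - T'" using T by auto
  then have "X i \<omega> \<le> (\<Sum>j\<in>{1..n}-T'. X j \<omega>)" by (intro member_le_sum) (use pos in auto)
  then show "x < (\<Sum>j\<in>{1..n}-T'. X j \<omega>)" using big tx i by fastforce
qed

lemma pt_E:
  assumes rn: "r < n" and T: "T \<subseteq> {1..n}" "card T = r+1"
    and ge: "\<forall>i\<in>T. X i \<omega> \<ge> a" and lt: "\<forall>i\<in>{1..n}-T. X i \<omega> < a"
    and s: "x - a < (\<Sum>i\<in>{1..n}-T. X i \<omega>)"
  shows "x < trimmed_sum X n r \<omega>"
  unfolding trimmed_char[OF less_imp_le[OF rn]]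
proof (intro allI impI)
  fix T' assume T': "T' \<subseteq> {1..n}" "card T' = r"
  let ?I = "{1..n}"
  have fT: "finite T" "finite T'" using T T' finite_subset by auto
  have s1: "(\<Sum>i\<in>?I-T'. X i \<omega>) = (\<Sum>i\<in>T-T'. X i \<omega>) + (\<Sum>i\<in>(?I-T)-T'. X i \<omega>)"
  proof -
    have "?I - T' = (T - T') \<union> ((?I-T)-T')" using T by auto
    then show ?thesis using sum.union_disjoint[of "T-T'" "(?I-T)-T'" "\<lambda>i. X i \<omega>"] fT by auto
  qed
  have s2: "(\<Sum>i\<in>?I-T. X i \<omega>) = (\<Sum>i\<in>(?I-T)\<inter>T'. X i \<omega>) + (\<Sum>i\<in>(?I-T)-T'. X i \<omega>)"
    by (rule sum.Int_Diff) simp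
  have c: "card (T - T') = card ((?I-T)\<inter>T') + 1"
  proof -
    have e: "(?I-T)\<inter>T' = T' - T" using T' by auto
    have "card (T - T') = card T - card (T \<inter> T')" using fT by (simp add: card_Diff_subset_Int)
    moreover have "card (T' - T) = card T' - card (T' \<inter> T)" using fT by (simp add: card_Diff_subset_Int)
    moreover have "card (T' \<inter> T) \<le> card T'" using fT by (intro card_mono) auto
    ultimately show ?thesis using e T T' by (simp add: Int_commute)
  qed
  have b1: "card (T-T') * a \<le> (\<Sum>i\<in>T-T'. X i \<omega>)"
    by (rule sum_bounded_below) (use ge in auto)
  have b2: "(\<Sum>i\<in>(?I-T)\<inter>T'. X i \<omega>) \<le> card ((?I-T)\<inter>T') * a"
    by (rule sum_bounded_above) (use lt in \<open>auto simp: less_imp_le\<close>)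
  have "real (card (T-T')) * a = real (card ((?I-T)\<inter>T')) * a + a" using c by (simp add: algebra_simps)
  then show "x < (\<Sum>i\<in>?I-T'. X i \<omega>)" using s1 s2 b1 b2 s by linarith
qed

lemma pow_gt_half:
  fixes k m :: nat
  assumes "m \<ge> 1" "(2::real)^m / 2 < 2^k"
  shows "(2::real)^m \<le> 2^k"
proof -
  have "(2::real)^m / 2 = 2^(m-1)" using assms(1) by (simp add: power_diff)
  then have "(2::real)^(m-1) < 2^k" using assms by simp
  then have "m - 1 < k" by (rule power_less_imp_less_exp[rotated]) simp
  then have "m \<le> k" by simp
  then show ?thesis by (rule power_increasing) simp
qed

lemma pow_between:
  fixes k m :: nat
  assumes "(2::real)^m \<le> 2^k" "(2::real)^k < 2^(m+1)"
  shows "(2::real)^k = 2^m"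
proof -
  have "m \<le> k" using assms(1) by (rule power_le_imp_le_exp[rotated]) simp
  moreover have "k < m+1" using assms(2) by (rule power_less_imp_less_exp[rotated]) simp
  ultimately show ?thesis by simp
qed

lemma pt_up:
  assumes rn: "r < n"
    and good: "\<forall>i\<in>{1..n}. \<exists>k\<ge>1. X i \<omega> = 2^k" and m: "m \<ge> n+1" and x: "2^m \<le> x"
    and S: "x < trimmed_sum X n r \<omega>"
  shows "(\<exists>U. U \<subseteq> {1..n} \<and> card U = r+2 \<and> (\<forall>i\<in>U. X i \<omega> \<ge> 2^(m-n))) \<or>
         (\<exists>T. T \<subseteq> {1..n} \<and> card T = r+1 \<and> (\<forall>i\<in>T. X i \<omega> \<ge> 2^(m+1))) \<or>
         (\<exists>T. T \<subseteq> {1..n} \<and> card T = r+1 \<and> (\<forall>i\<in>T. X i \<omega> \<ge> 2^m) \<and> \<not>(\<forall>i\<in>T. X i \<omega> \<ge> 2^(m+1)) \<and>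
            (\<forall>i\<in>{1..n}-T. X i \<omega> < 2^m) \<and> x - 2^m < (\<Sum>i\<in>{1..n}-T. X i \<omega>))"
proof -
  let ?I = "{1..n}"
  define a where "a = (2::real)^m"
  define b where "b = (2::real)^(m-n)"
  have Sall: "\<And>T'. T' \<subseteq> ?I \<Longrightarrow> card T' = r \<Longrightarrow> x < (\<Sum>i\<in>?I-T'. X i \<omega>)"
    using S unfolding trimmed_char[OF less_imp_le[OF rn]] by blast
  have bpos: "b > 0" unfolding b_def by simp
  have nb: "real n * b \<le> a / 2"
  proof -
    have "a = 2^n * b" unfolding a_def b_def using m by (simp add: power_add[symmetric])
    moreover have "real (2 * n) \<le> real (2^n)" using two_n_le[of n] rn by (intro of_nat_mono) simp
    then have "2 * real n \<le> 2^n" by simp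
    ultimately show ?thesis using bpos by (simp add: field_simps)
  qed
  have pos: "\<forall>i\<in>?I. X i \<omega> > 0" using good by fastforce
  define H where "H = {i\<in>?I. X i \<omega> \<ge> b}"
  define H2 where "H2 = {i\<in>?I. X i \<omega> \<ge> 2^(m+1)}"
  have fH: "finite H" "H \<subseteq> ?I" "finite H2" "H2 \<subseteq> ?I" unfolding H_def H2_def by auto
  show ?thesis
  proof (cases "card H \<ge> r+2")
    case True
    then obtain U where "U \<subseteq> H" "card U = r+2" by (meson obtain_subset_with_card_n)
    then show ?thesis unfolding H_def b_def by blast
  next
    case c1: False
    show ?thesis
    proof (cases "card H2 \<ge> r+1")
      case True
      then obtain U where "U \<subseteq> H2" "card U = r+1" by (meson obtain_subset_with_card_n)
      then show ?thesis unfolding H2_def by blast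
    next
      case c2: False
      have smallsum: "(\<Sum>i\<in>?I-T'. X i \<omega>) \<le> a/2" if "H \<subseteq> T'" for T'
      proof -
        have "(\<Sum>i\<in>?I-T'. X i \<omega>) \<le> card (?I-T') * b"
          by (rule sum_bounded_above) (use that in \<open>auto simp: H_def less_imp_le\<close>)
        also have "\<dots> \<le> real n * b" using bpos by (intro mult_right_mono) (auto simp: card_Diff_subset_Int le_diff_conv2 intro: order_trans[OF card_mono[of ?I]])
        finally show ?thesis using nb by linarith
      qed
      have apos: "a > 0" unfolding a_def by simp
      have cardH: "card H = r+1"
      proof (rule ccontr)
        assume "card H \<noteq> r+1"
        then have "card H \<le> r" using c1 by simp
        then obtain T' where T': "H \<subseteq> T'" "T' \<subseteq> ?I" "card T' = r"
          using extend_set[OF fH(2), of r] rn by auto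
        have "x < (\<Sum>i\<in>?I-T'. X i \<omega>)" by (rule Sall) (use T' in auto)
        then show False using smallsum[OF T'(1)] x apos unfolding a_def by linarith
      qed
      then have Hne: "H \<noteq> {}" by auto
      define v where "v = Min ((\<lambda>i. X i \<omega>) ` H)"
      have "v \<in> (\<lambda>i. X i \<omega>) ` H" unfolding v_def using fH Hne by (intro Min_in) auto
      then obtain j where j: "j \<in> H" "X j \<omega> = v" by auto
      have jmin: "\<forall>i\<in>H. X j \<omega> \<le> X i \<omega>" using j fH unfolding v_def by auto
      have sumrem: "(\<Sum>i\<in>?I-(H-{i0}). X i \<omega>) = X i0 \<omega> + (\<Sum>i\<in>?I-H. X i \<omega>)" if "i0 \<in> H" for i0
      proof -
        have "?I-(H-{i0}) = insert i0 (?I-H)" using that fH by auto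
        then show ?thesis using that by (simp add: sum.insert)
      qed
      have cardHi: "card (H - {i0}) = r" if "i0 \<in> H" for i0 using that cardH fH by simp
      have "x < X j \<omega> + (\<Sum>i\<in>?I-H. X i \<omega>)"
        using Sall[of "H - {j}"] cardHi[OF j(1)] sumrem[OF j(1)] fH by auto
      then have "a / 2 < X j \<omega>" using smallsum[of H] x unfolding a_def by auto
      moreover obtain k where "X j \<omega> = 2^k" using good j fH by blast
      ultimately have Xja: "a \<le> X j \<omega>" unfolding a_def using pow_gt_half[of m k] m by simp
      have allH: "\<forall>i\<in>H. X i \<omega> \<ge> a" using jmin Xja by force
      have blea: "b \<le> a" unfolding a_def b_def by (intro power_increasing) auto
      have outH: "\<forall>i\<in>?I-H. X i \<omega> < a" using blea unfolding H_def by auto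
      have notall: "\<not>(\<forall>i\<in>H. X i \<omega> \<ge> 2^(m+1))"
      proof
        assume "\<forall>i\<in>H. X i \<omega> \<ge> 2^(m+1)"
        then have "H \<subseteq> H2" unfolding H2_def H_def by auto
        then have "card H \<le> card H2" using fH by (intro card_mono) auto
        then show False using cardH c2 by simp
      qed
      then obtain i0 where i0: "i0 \<in> H" "X i0 \<omega> < 2^(m+1)" by force
      obtain k0 where k0: "X i0 \<omega> = 2^k0" using good i0 fH by blast
      have "X i0 \<omega> = a" using pow_between[of m k0] k0 i0 allH unfolding a_def by auto
      moreover have "x < X i0 \<omega> + (\<Sum>i\<in>?I-H. X i \<omega>)"
        using Sall[of "H - {i0}"] cardHi[OF i0(1)] sumrem[OF i0(1)] fH by auto
      ultimately have "x - 2^m < (\<Sum>i\<in>?I-H. X i \<omega>)" unfolding a_def by simp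
      then have "H \<subseteq> ?I \<and> card H = r+1 \<and> (\<forall>i\<in>H. X i \<omega> \<ge> 2^m) \<and> \<not>(\<forall>i\<in>H. X i \<omega> \<ge> 2^(m+1)) \<and>
            (\<forall>i\<in>?I-H. X i \<omega> < 2^m) \<and> x - 2^m < (\<Sum>i\<in>?I-H. X i \<omega>)"
        using fH cardH allH notall outH unfolding a_def by blast
      then show ?thesis by blast
    qed
  qed
qed

locale pw2 = pw + fixes n r :: nat assumes rn: "r < n"
begin

definition Fam :: "nat \<Rightarrow> nat set set" where "Fam k = {T. T \<subseteq> {1..n} \<and> card T = k}"

lemma Fam_finite: "finite (Fam k)"
  by (rule finite_subset[of _ "Pow {1..n}"]) (auto simp: Fam_def)

lemma Fam_card: "card (Fam k) = n choose k"
  unfolding Fam_def using n_subsets[of "{1..n}" k] by simp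

definition Dset :: "nat \<Rightarrow> nat set \<Rightarrow> 'a set" where
  "Dset j T = {\<omega>\<in>space M. (\<forall>i\<in>T. X i \<omega> \<ge> 2^j) \<and> (\<forall>i\<in>{1..n}-T. X i \<omega> < 2^j)}"
definition Eset :: "nat \<Rightarrow> real \<Rightarrow> nat set \<Rightarrow> 'a set" where
  "Eset m x T = {\<omega>\<in>space M. (\<forall>i\<in>T. X i \<omega> \<ge> 2^m) \<and> \<not>(\<forall>i\<in>T. X i \<omega> \<ge> 2^(m+1)) \<and>
     (\<forall>i\<in>{1..n}-T. X i \<omega> < 2^m) \<and> x - 2^m < (\<Sum>i\<in>{1..n}-T. X i \<omega>)}"
definition Aset :: "nat \<Rightarrow> nat set \<Rightarrow> 'a set" where
  "Aset j T = {\<omega>\<in>space M. \<forall>i\<in>T. X i \<omega> \<ge> 2^j}"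

lemma ev_sets:
  assumes T: "T \<subseteq> {1..n}"
  shows "Dset j T \<in> events" "Eset m x T \<in> events" "Aset j T \<in> events"
proof -
  have [measurable]: "\<And>i. i \<in> T \<Longrightarrow> X i \<in> borel_measurable M" "\<And>i. i \<in> {1..n}-T \<Longrightarrow> X i \<in> borel_measurable M"
    using T Xmeas by auto
  have f: "finite T" "finite ({1..n}-T)" using T finite_subset by auto
  show "Dset j T \<in> events" unfolding Dset_def using f by measurable
  show "Eset m x T \<in> events" unfolding Eset_def using f by measurable
  show "Aset j T \<in> events" unfolding Aset_def using f by measurable
qed

lemma ev_S: "{\<omega>\<in>space M. x < trimmed_sum X n r \<omega>} \<in> events"
proof -
  have "{\<omega>\<in>space M. x < trimmed_sum X n r \<omega>} = {\<omega>\<in>space M. \<forall>T\<in>Fam r. x < (\<Sum>i\<in>{1..n}-T. X i \<omega>)}"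
  proof -
    have "\<And>\<omega>. x < trimmed_sum X n r \<omega> \<longleftrightarrow> (\<forall>T\<in>Fam r. x < (\<Sum>i\<in>{1..n}-T. X i \<omega>))"
      using trimmed_char[OF less_imp_le[OF rn], of x X] by (auto simp: Fam_def)
    then show ?thesis by auto
  qed
  also have "\<dots> \<in> events"
  proof -
    have [measurable]: "\<And>i T. i \<in> {1..n}-T \<Longrightarrow> X i \<in> borel_measurable M" using Xmeas by auto
    show ?thesis using Fam_finite by measurable
  qed
  finally show ?thesis .
qed

lemma AE_good: "AE \<omega> in M. \<forall>i\<in>{1..n}. \<exists>k\<ge>1. X i \<omega> = 2^k"
proof (rule AE_finite_allI)
  fix i assume "i \<in> {1..n}" then show "AE \<omega> in M. \<exists>k\<ge>1. X i \<omega> = 2^k" using AE_pow[of i] by simp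
qed simp

lemma disj_aux:
  assumes "T \<noteq> T'" "T \<subseteq> {1..n}" "T' \<subseteq> {1..n}" "card T = card T'"
  shows "{\<omega>. (\<forall>i\<in>T. X i \<omega> \<ge> c) \<and> (\<forall>i\<in>{1..n}-T. X i \<omega> < c)} \<inter>
         {\<omega>. (\<forall>i\<in>T'. X i \<omega> \<ge> c) \<and> (\<forall>i\<in>{1..n}-T'. X i \<omega> < c)} = {}"
proof -
  have "(\<exists>i. i \<in> T \<and> i \<notin> T') \<or> (\<exists>i. i \<in> T' \<and> i \<notin> T)" using assms(1) by blast
  then show ?thesis
  proof
    assume "\<exists>i. i \<in> T \<and> i \<notin> T'"
    then obtain i where i0: "i \<in> T" "i \<notin> T'" by blast
    then have i: "i \<in> T" "i \<in> {1..n} - T'" using assms(2) by auto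
    show ?thesis
    proof (rule ccontr)
      assume "\<not> ?thesis"
      then obtain \<omega> where "\<forall>i\<in>T. X i \<omega> \<ge> c" "\<forall>i\<in>{1..n}-T'. X i \<omega> < c" by blast
      then have "X i \<omega> \<ge> c" "X i \<omega> < c" using i by auto
      then show False by linarith
    qed
  next
    assume "\<exists>i. i \<in> T' \<and> i \<notin> T"
    then obtain i where i0: "i \<in> T'" "i \<notin> T" by blast
    then have i: "i \<in> T'" "i \<in> {1..n} - T" using assms(3) by auto
    show ?thesis
    proof (rule ccontr)
      assume "\<not> ?thesis"
      then obtain \<omega> where "\<forall>i\<in>T'. X i \<omega> \<ge> c" "\<forall>i\<in>{1..n}-T. X i \<omega> < c" by blast
      then have "X i \<omega> \<ge> c" "X i \<omega> < c" using i by auto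
      then show False by linarith
    qed
  qed
qed

lemma lower:
  assumes m: "m \<ge> 1" and x: "x < 2^(m+1)"
  shows "(\<Sum>T\<in>Fam (r+1). prob (Dset (m+1) T)) + (\<Sum>T\<in>Fam (r+1). prob (Eset m x T))
     \<le> prob {\<omega>\<in>space M. x < trimmed_sum X n r \<omega>}"
proof -
  define U1 where "U1 = (\<Union>T\<in>Fam (r+1). Dset (m+1) T)"
  define U2 where "U2 = (\<Union>T\<in>Fam (r+1). Eset m x T)"
  have Fsub: "\<And>T. T \<in> Fam k \<Longrightarrow> T \<subseteq> {1..n}" for k by (auto simp: Fam_def)
  have p2m: "(2::real)^m \<le> 2^(m+1)" by (rule power_increasing) auto
  have d1: "disjoint_family_on (Dset (m+1)) (Fam (r+1))"
    unfolding disjoint_family_on_def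
  proof (intro ballI impI)
    fix T T' assume TT: "T \<in> Fam (r+1)" "T' \<in> Fam (r+1)" "T \<noteq> T'"
    have h: "{\<omega>. (\<forall>i\<in>T. X i \<omega> \<ge> 2^(m+1)) \<and> (\<forall>i\<in>{1..n}-T. X i \<omega> < 2^(m+1))} \<inter>
         {\<omega>. (\<forall>i\<in>T'. X i \<omega> \<ge> 2^(m+1)) \<and> (\<forall>i\<in>{1..n}-T'. X i \<omega> < 2^(m+1))} = {}"
      by (rule disj_aux) (use TT in \<open>auto simp: Fam_def\<close>)
    show "Dset (m+1) T \<inter> Dset (m+1) T' = {}"
      using h unfolding Dset_def by blast
  qed
  have d2: "disjoint_family_on (Eset m x) (Fam (r+1))"
    unfolding disjoint_family_on_def
  proof (intro ballI impI)
    fix T T' assume TT: "T \<in> Fam (r+1)" "T' \<in> Fam (r+1)" "T \<noteq> T'"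
    have h: "{\<omega>. (\<forall>i\<in>T. X i \<omega> \<ge> 2^m) \<and> (\<forall>i\<in>{1..n}-T. X i \<omega> < 2^m)} \<inter>
         {\<omega>. (\<forall>i\<in>T'. X i \<omega> \<ge> 2^m) \<and> (\<forall>i\<in>{1..n}-T'. X i \<omega> < 2^m)} = {}"
      by (rule disj_aux) (use TT in \<open>auto simp: Fam_def\<close>)
    show "Eset m x T \<inter> Eset m x T' = {}"
      using h unfolding Eset_def by blast
  qed
  have d12: "U1 \<inter> U2 = {}"
  proof (rule ccontr)
    assume "U1 \<inter> U2 \<noteq> {}"
    then obtain \<omega> T T' where TT: "T \<in> Fam (r+1)" "T' \<in> Fam (r+1)" "\<omega> \<in> Dset (m+1) T" "\<omega> \<in> Eset m x T'"
      unfolding U1_def U2_def by auto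
    have "T \<subseteq> T'"
    proof
      fix i assume "i \<in> T"
      then have "X i \<omega> \<ge> 2^(m+1)" "i \<in> {1..n}" using TT unfolding Dset_def Fam_def by auto
      then show "i \<in> T'"
      proof (rule_tac ccontr)
        assume h: "2 ^ (m + 1) \<le> X i \<omega>" "i \<in> {1..n}" "i \<notin> T'"
        then have "X i \<omega> < 2^m" using TT(4) unfolding Eset_def by auto
        then show False using h p2m by linarith
      qed
    qed
    then have "T = T'" using TT by (intro card_subset_eq) (auto simp: Fam_def intro: finite_subset)
    then show False using TT unfolding Dset_def Eset_def by auto
  qed
  have ev1: "Dset (m+1) T \<in> events" "Eset m x T \<in> events" if "T \<in> Fam (r+1)" for T
    using ev_sets[OF Fsub[OF that]] by auto
  have pU1: "prob U1 = (\<Sum>T\<in>Fam (r+1). prob (Dset (m+1) T))"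
    unfolding U1_def by (rule finite_measure_finite_Union[OF Fam_finite _ d1]) (use ev1 in auto)
  have pU2: "prob U2 = (\<Sum>T\<in>Fam (r+1). prob (Eset m x T))"
    unfolding U2_def by (rule finite_measure_finite_Union[OF Fam_finite _ d2]) (use ev1 in auto)
  have evU: "U1 \<in> events" "U2 \<in> events" unfolding U1_def U2_def using ev1 Fam_finite by auto
  have "prob (U1 \<union> U2) = prob U1 + prob U2" by (rule finite_measure_Union[OF evU d12])
  moreover have "prob (U1 \<union> U2) \<le> prob {\<omega>\<in>space M. x < trimmed_sum X n r \<omega>}"
  proof (rule finite_measure_mono_AE[OF _ ev_S])
    show "AE \<omega> in M. \<omega> \<in> U1 \<union> U2 \<longrightarrow> \<omega> \<in> {\<omega>\<in>space M. x < trimmed_sum X n r \<omega>}"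
      using AE_good
    proof eventually_elim
      case (elim \<omega>)
      have pos: "\<forall>i\<in>{1..n}. X i \<omega> \<ge> 0" using elim by fastforce
      show ?case
      proof
        assume "\<omega> \<in> U1 \<union> U2"
        then show "\<omega> \<in> {\<omega>\<in>space M. x < trimmed_sum X n r \<omega>}"
        proof
          assume "\<omega> \<in> U1"
          then obtain T where T: "T \<in> Fam (r+1)" "\<omega> \<in> Dset (m+1) T" unfolding U1_def by auto
          have "x < trimmed_sum X n r \<omega>"
            using pt_D[where T=T and X=X and \<omega>=\<omega> and t="2^(m+1)" and x=x, OF rn _ _ _ x pos] T
            by (auto simp: Fam_def Dset_def)
          then show ?thesis using T unfolding Dset_def by auto
        next
          assume "\<omega> \<in> U2"
          then obtain T where T: "T \<in> Fam (r+1)" "\<omega> \<in> Eset m x T" unfolding U2_def by auto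
          have "x < trimmed_sum X n r \<omega>"
            using pt_E[where T=T and X=X and \<omega>=\<omega> and a="2^m" and x=x, OF rn] T
            by (auto simp: Fam_def Eset_def)
          then show ?thesis using T unfolding Eset_def by auto
        qed
      qed
    qed
  qed
  ultimately show ?thesis using pU1 pU2 by simp
qed

lemma upper:
  assumes m: "m \<ge> n+1" and x: "2^m \<le> x"
  shows "prob {\<omega>\<in>space M. x < trimmed_sum X n r \<omega>}
     \<le> (\<Sum>U\<in>Fam (r+2). prob (Aset (m-n) U)) + (\<Sum>T\<in>Fam (r+1). prob (Aset (m+1) T))
        + (\<Sum>T\<in>Fam (r+1). prob (Eset m x T))"
proof -
  define U1 where "U1 = (\<Union>U\<in>Fam (r+2). Aset (m-n) U)"
  define U2 where "U2 = (\<Union>T\<in>Fam (r+1). Aset (m+1) T)"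
  define U3 where "U3 = (\<Union>T\<in>Fam (r+1). Eset m x T)"
  have Fsub: "T \<in> Fam k \<Longrightarrow> T \<subseteq> {1..n}" for T k by (auto simp: Fam_def)
  have evU: "U1 \<in> events" "U2 \<in> events" "U3 \<in> events"
    unfolding U1_def U2_def U3_def using ev_sets Fsub Fam_finite by auto
  have "prob {\<omega>\<in>space M. x < trimmed_sum X n r \<omega>} \<le> prob (U1 \<union> U2 \<union> U3)"
  proof (rule finite_measure_mono_AE)
    show "AE \<omega> in M. \<omega> \<in> {\<omega>\<in>space M. x < trimmed_sum X n r \<omega>} \<longrightarrow> \<omega> \<in> U1 \<union> U2 \<union> U3"
      using AE_good
    proof eventually_elim
      case (elim \<omega>)
      show ?case
      proof
        assume "\<omega> \<in> {\<omega>\<in>space M. x < trimmed_sum X n r \<omega>}"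
        then have \<omega>: "\<omega> \<in> space M" "x < trimmed_sum X n r \<omega>" by auto
        from pt_up[OF rn elim m x \<omega>(2)] show "\<omega> \<in> U1 \<union> U2 \<union> U3"
        proof (elim disjE exE conjE)
          fix U assume "U \<subseteq> {1..n}" "card U = r+2" "\<forall>i\<in>U. X i \<omega> \<ge> 2^(m-n)"
          then have "\<omega> \<in> U1" using \<omega> unfolding U1_def Fam_def Aset_def by auto
          then show ?thesis by auto
        next
          fix T assume "T \<subseteq> {1..n}" "card T = r+1" "\<forall>i\<in>T. X i \<omega> \<ge> 2^(m+1)"
          then have "\<omega> \<in> U2" using \<omega> unfolding U2_def Fam_def Aset_def by auto
          then show ?thesis by auto
        next
          fix T assume "T \<subseteq> {1..n}" "card T = r+1" "\<forall>i\<in>T. X i \<omega> \<ge> 2^m" "\<not>(\<forall>i\<in>T. X i \<omega> \<ge> 2^(m+1))"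
            "\<forall>i\<in>{1..n}-T. X i \<omega> < 2^m" "x - 2^m < (\<Sum>i\<in>{1..n}-T. X i \<omega>)"
          then have "\<omega> \<in> Eset m x T" "T \<in> Fam (r+1)" using \<omega> unfolding Fam_def Eset_def by auto
          then have "\<omega> \<in> U3" unfolding U3_def by auto
          then show ?thesis by auto
        qed
      qed
    qed
  qed (use evU in auto)
  also have "\<dots> \<le> prob (U1 \<union> U2) + prob U3" by (rule measure_Un_le) (use evU in auto)
  also have "prob (U1 \<union> U2) \<le> prob U1 + prob U2" by (rule measure_Un_le) (use evU in auto)
  also have "prob U1 \<le> (\<Sum>U\<in>Fam (r+2). prob (Aset (m-n) U))"
    unfolding U1_def by (rule finite_measure_subadditive_finite[OF Fam_finite]) (use ev_sets Fsub in auto)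
  also have "prob U2 \<le> (\<Sum>T\<in>Fam (r+1). prob (Aset (m+1) T))"
    unfolding U2_def by (rule finite_measure_subadditive_finite[OF Fam_finite]) (use ev_sets Fsub in auto)
  also have "prob U3 \<le> (\<Sum>T\<in>Fam (r+1). prob (Eset m x T))"
    unfolding U3_def by (rule finite_measure_subadditive_finite[OF Fam_finite]) (use ev_sets Fsub in auto)
  finally show ?thesis by simp
qed

lemma pD:
  assumes T: "T \<in> Fam (r+1)" and m: "m \<ge> 1"
  shows "prob (Dset (m+1) T) = (1/2^m)^(r+1) * (1 - 1/2^m)^(n-(r+1))"
proof -
  have T': "T \<subseteq> {1..n}" "card T = r+1" using T by (auto simp: Fam_def)
  have "card ({1..n} - T) = n - (r+1)" using T' by (simp add: card_Diff_subset finite_subset)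
  moreover have "(2::real)/2^(m+1) = 1/2^m" by simp
  ultimately show ?thesis
    using prob_D[of "{1..n}" T "m+1"] T' unfolding Dset_def by simp
qed

lemma pA:
  assumes U: "U \<subseteq> {1..n}" and j: "j \<ge> 1"
  shows "prob (Aset j U) = (2/2^j)^card U"
  unfolding Aset_def by (rule prob_all_ge[OF _ _ j]) (use U finite_subset in auto)

definition qq :: "nat \<Rightarrow> real \<Rightarrow> nat set \<Rightarrow> real" where
  "qq m x T = prob {\<omega>\<in>space M. (\<forall>i\<in>{1..n}-T. X i \<omega> < 2^m) \<and> x - 2^m < (\<Sum>i\<in>{1..n}-T. X i \<omega>)}"

definition pp :: "nat \<Rightarrow> real \<Rightarrow> real" where
  "pp m x = prob {\<omega>\<in>space M. x - 2^m < (\<Sum>i\<in>{1..n-(r+1)}. X i \<omega>)}"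

lemma pE:
  assumes T: "T \<in> Fam (r+1)" and m: "m \<ge> 1"
  shows "prob (Eset m x T) = ((2/2^m)^(r+1) - (1/2^m)^(r+1)) * qq m x T"
proof -
  have T': "T \<subseteq> {1..n}" "card T = r+1" using T by (auto simp: Fam_def)
  have "(2::real)/2^(m+1) = 1/2^m" by simp
  then show ?thesis
    using prob_E[of "{1..n}" T m "x - 2^m"] T' m unfolding Eset_def qq_def by simp
qed

lemma qq_bounds:
  assumes T: "T \<in> Fam (r+1)" and m: "m \<ge> 1"
  shows "qq m x T \<le> pp m x" "pp m x - (n-(r+1)) * (2/2^m) \<le> qq m x T"
proof -
  have T': "T \<subseteq> {1..n}" "card T = r+1" using T by (auto simp: Fam_def)
  have J: "finite ({1..n}-T)" "{1..n}-T \<subseteq> {1..}" by auto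
  have c: "card ({1..n} - T) = n - (r+1)" using T' by (simp add: card_Diff_subset finite_subset)
  have eq: "prob {\<omega>\<in>space M. x - 2^m < (\<Sum>i\<in>{1..n}-T. X i \<omega>)} = pp m x"
    unfolding pp_def using sum_law[OF J c] .
  show "qq m x T \<le> pp m x" using q_bounds(1)[OF J m, of "x - 2^m"] eq unfolding qq_def by simp
  show "pp m x - (n-(r+1)) * (2/2^m) \<le> qq m x T" using q_bounds(2)[OF J m, of "x - 2^m"] eq c unfolding qq_def by simp
qed

lemma pp_nonneg: "pp m x \<ge> 0" unfolding pp_def by simp

definition KK :: real where
  "KK = real (n choose (r+1)) * (n-(r+1)) + 2 * (2^(r+1)-1) * real (n choose (r+1)) * (n-(r+1))
        + real (n choose (r+2)) * 2^((n+1)*(r+2))"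

lemma main_bound:
  assumes m: "m \<ge> n+1" and x1: "2^m \<le> x" and x2: "x < 2^(m+1)"
  defines "e \<equiv> 1/(2::real)^m"
  shows "\<bar>prob {\<omega>\<in>space M. x < trimmed_sum X n r \<omega>}
          - real (n choose (r+1)) * e^(r+1) * (1 + (2^(r+1)-1) * pp m x)\<bar> \<le> KK * e^(r+2)"
proof -
  let ?C = "real (n choose (r+1))" and ?c = "(2::real)^(r+1) - 1" and ?k = "real (n-(r+1))"
  let ?P = "prob {\<omega>\<in>space M. x < trimmed_sum X n r \<omega>}"
  have m1: "m \<ge> 1" using m by simp
  have e: "e > 0" "e \<le> 1" unfolding e_def by auto
  have c0: "?c \<ge> 0" using one_le_power[of "2::real" "r+1"] by simp
  have p01: "0 \<le> pp m x" "pp m x \<le> 1" unfolding pp_def by auto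
  have Fsub: "T \<in> Fam k \<Longrightarrow> T \<subseteq> {1..n} \<and> card T = k" for T k by (auto simp: Fam_def)
  have cE: "(2/2^m)^(r+1) - (1/2^m)^(r+1) = ?c * e^(r+1)"
    unfolding e_def by (simp add: power_divide algebra_simps add_divide_distrib[symmetric])
  have sD: "(\<Sum>T\<in>Fam (r+1). prob (Dset (m+1) T)) = ?C * (e^(r+1) * (1 - e)^(n-(r+1)))"
  proof -
    have "(\<Sum>T\<in>Fam (r+1). prob (Dset (m+1) T)) = (\<Sum>T\<in>Fam (r+1). e^(r+1) * (1 - e)^(n-(r+1)))"
      using pD m1 unfolding e_def by (intro sum.cong) auto
    then show ?thesis by (simp add: Fam_card)
  qed
  have bern: "1 - ?k * e \<le> (1 - e)^(n-(r+1))"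
    using Bernoulli_inequality[of "-e" "n-(r+1)"] e by simp
  have lD: "?C * e^(r+1) - ?C * ?k * e^(r+2) \<le> (\<Sum>T\<in>Fam (r+1). prob (Dset (m+1) T))"
  proof -
    have "?C * e^(r+1) * (1 - ?k * e) \<le> ?C * e^(r+1) * (1 - e)^(n-(r+1))"
      using bern e by (intro mult_left_mono) auto
    then show ?thesis using sD by (simp add: algebra_simps)
  qed
  have lE: "?C * ?c * e^(r+1) * pp m x - 2 * ?c * ?C * ?k * e^(r+2) \<le> (\<Sum>T\<in>Fam (r+1). prob (Eset m x T))"
  proof -
    have "(\<Sum>T\<in>Fam (r+1). ?c * e^(r+1) * (pp m x - ?k * (2 * e))) \<le> (\<Sum>T\<in>Fam (r+1). prob (Eset m x T))"
    proof (rule sum_mono)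
      fix T assume T: "T \<in> Fam (r+1)"
      have "pp m x - ?k * (2*e) \<le> qq m x T" using qq_bounds(2)[OF T m1, of x] unfolding e_def by simp
      then have "?c * e^(r+1) * (pp m x - ?k * (2 * e)) \<le> ?c * e^(r+1) * qq m x T"
        using e c0 by (intro mult_left_mono) auto
      then show "?c * e^(r+1) * (pp m x - ?k * (2 * e)) \<le> prob (Eset m x T)" using pE[OF T m1, of x] cE by simp
    qed
    then show ?thesis by (simp add: Fam_card algebra_simps)
  qed
  have low: "?C * e^(r+1) * (1 + ?c * pp m x) - KK * e^(r+2) \<le> ?P"
  proof -
    have "?C * e^(r+1) * (1 + ?c * pp m x) - (?C * ?k + 2 * ?c * ?C * ?k) * e^(r+2) \<le> ?P"
      using lower[OF m1 x2] lD lE by (simp add: algebra_simps)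
    moreover have "(?C * ?k + 2 * ?c * ?C * ?k) * e^(r+2) \<le> KK * e^(r+2)"
    proof (rule mult_right_mono)
      show "?C * ?k + 2 * ?c * ?C * ?k \<le> KK" unfolding KK_def by simp
    qed (use e in simp)
    ultimately show ?thesis by linarith
  qed
  have uA1: "(\<Sum>U\<in>Fam (r+2). prob (Aset (m-n) U)) = real (n choose (r+2)) * 2^((n+1)*(r+2)) * e^(r+2)"
  proof -
    have two: "(2::real)/2^(m-n) = 2^(n+1) * e"
    proof -
      have "(2::real)^m = 2^n * 2^(m-n)" using m by (simp add: power_add[symmetric])
      then show ?thesis unfolding e_def by (simp add: field_simps)
    qed
    have "(\<Sum>U\<in>Fam (r+2). prob (Aset (m-n) U)) = (\<Sum>U\<in>Fam (r+2). (2^(n+1) * e)^(r+2))"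
      using pA m two by (intro sum.cong) (auto simp: Fam_def)
    also have "\<dots> = real (n choose (r+2)) * ((2^(n+1))^(r+2) * e^(r+2))"
      by (simp add: Fam_card power_mult_distrib)
    also have "((2::real)^(n+1))^(r+2) = 2^((n+1)*(r+2))" by (rule power_mult[symmetric])
    finally have "(\<Sum>U\<in>Fam (r+2). prob (Aset (m-n) U)) = real (n choose (r+2)) * (2^((n+1)*(r+2)) * e^(r+2))" .
    then show ?thesis by simp
  qed
  have True
  proof -
    show True ..
  qed
  have uA2: "(\<Sum>T\<in>Fam (r+1). prob (Aset (m+1) T)) = ?C * e^(r+1)"
  proof -
    have "(\<Sum>T\<in>Fam (r+1). prob (Aset (m+1) T)) = (\<Sum>T\<in>Fam (r+1). e^(r+1))"
      using pA unfolding e_def by (intro sum.cong) (auto simp: Fam_def)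
    then show ?thesis by (simp add: Fam_card)
  qed
  have uE: "(\<Sum>T\<in>Fam (r+1). prob (Eset m x T)) \<le> ?C * ?c * e^(r+1) * pp m x"
  proof -
    have "(\<Sum>T\<in>Fam (r+1). prob (Eset m x T)) \<le> (\<Sum>T\<in>Fam (r+1). ?c * e^(r+1) * pp m x)"
    proof (rule sum_mono)
      fix T assume T: "T \<in> Fam (r+1)"
      have "?c * e^(r+1) * qq m x T \<le> ?c * e^(r+1) * pp m x"
        using qq_bounds(1)[OF T m1, of x] e c0 by (intro mult_left_mono) auto
      then show "prob (Eset m x T) \<le> ?c * e^(r+1) * pp m x" using pE[OF T m1, of x] cE by simp
    qed
    then show ?thesis by (simp add: Fam_card algebra_simps)
  qed
  have up: "?P \<le> ?C * e^(r+1) * (1 + ?c * pp m x) + KK * e^(r+2)"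
  proof -
    have "?P \<le> real (n choose (r+2)) * 2^((n+1)*(r+2)) * e^(r+2) + ?C * e^(r+1) + ?C * ?c * e^(r+1) * pp m x"
      using upper[OF m x1] uA1 uA2 uE by linarith
    moreover have "real (n choose (r+2)) * 2^((n+1)*(r+2)) * e^(r+2) \<le> KK * e^(r+2)"
    proof (rule mult_right_mono)
      have "0 \<le> ?C * ?k + 2 * ?c * ?C * ?k" using c0 by simp
      then show "real (n choose (r+2)) * 2^((n+1)*(r+2)) \<le> KK" unfolding KK_def by linarith
    qed (use e in simp)
    ultimately show ?thesis by (simp add: algebra_simps)
  qed
  show ?thesis using low up by (simp add: abs_le_iff algebra_simps)
qed

end

lemma log_facts:
  fixes x :: real and N :: nat
  assumes x: "x \<ge> 2^N"
  defines "m \<equiv> nat \<lfloor>log 2 x\<rfloor>"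
  shows "m \<ge> N" "2^m \<le> x" "x < 2^(m+1)"
    "2 powr (real k * frac (log 2 x)) = (x / 2^m)^k"
    "x * (1 - 2 powr (- frac (log 2 x))) = x - 2^m"
proof -
  have xpos: "x > 0" using x by (smt (verit) zero_less_power)
  define l where "l = log 2 x"
  have lN: "real N \<le> l" unfolding l_def using xpos x
    by (subst le_log_iff) (auto simp: powr_realpow)
  then have fN: "int N \<le> \<lfloor>l\<rfloor>" by (simp add: le_floor_iff)
  then have mr: "real m = of_int \<lfloor>l\<rfloor>" unfolding m_def l_def by simp
  show "m \<ge> N" using fN unfolding m_def l_def by simp
  have fl: "real m \<le> l" "l < real m + 1" using mr by linarith+
  have x2: "x = 2 powr l" unfolding l_def using xpos by simp
  have "(2::real)^m = 2 powr real m" by (simp add: powr_realpow)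
  also have "\<dots> \<le> 2 powr l" using fl by simp
  finally show "2^m \<le> x" using x2 by simp
  have "x < 2 powr (real m + 1)" using x2 fl by simp
  also have "2 powr (real m + 1) = (2::real)^(m+1)" using powr_realpow[of 2 "m+1"] by (simp add: add.commute)
  finally show "x < 2^(m+1)" .
  have fr: "frac (log 2 x) = l - real m" using mr unfolding l_def frac_def by simp
  have d: "2 powr (l - real m) = x / 2^m" using x2 by (simp add: powr_diff powr_realpow)
  show "2 powr (real k * frac (log 2 x)) = (x / 2^m)^k"
    unfolding fr d[symmetric] by (simp add: powr_power)
  have "2 powr (- frac (log 2 x)) = inverse (2 powr (l - real m))" unfolding fr by (rule powr_minus)
  also have "\<dots> = 2^m / x" using d by simp
  finally have "2 powr (- frac (log 2 x)) = 2^m / x" .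
  then show "x * (1 - 2 powr (- frac (log 2 x))) = x - 2^m" using xpos by (simp add: field_simps)
qed

lemma lim_by_bound:
  fixes g :: "real \<Rightarrow> real"
  assumes ev: "eventually (\<lambda>x. \<bar>g x - c\<bar> \<le> K / x) F" and F: "F \<le> at_top"
  shows "(g \<longlongrightarrow> c) F"
proof -
  have l0: "((\<lambda>x. K/x) \<longlongrightarrow> 0) F"
    by (rule tendsto_mono[OF F]) (rule tendsto_divide_0[OF tendsto_const filterlim_at_top_imp_at_infinity[OF filterlim_ident]])
  show ?thesis
  proof (rule tendsto_sandwich[where f="\<lambda>x. c - K/x" and h="\<lambda>x. c + K/x"])
    show "eventually (\<lambda>x. c - K/x \<le> g x) F" using ev by eventually_elim (simp add: abs_le_iff)
    show "eventually (\<lambda>x. g x \<le> c + K/x) F" using ev by eventually_elim (simp add: abs_le_iff)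
    show "((\<lambda>x. c - K/x) \<longlongrightarrow> c) F" using tendsto_diff[OF tendsto_const l0, of c] by simp
    show "((\<lambda>x. c + K/x) \<longlongrightarrow> c) F" using tendsto_add[OF tendsto_const l0, of c] by simp
  qed
qed

context pw2 begin

lemma KK_nonneg: "KK \<ge> 0"
proof -
  have "(2::real)^(r+1) - 1 \<ge> 0" using one_le_power[of "2::real" "r+1"] by simp
  then show ?thesis unfolding KK_def by simp
qed

lemma final:
  shows "(\<lambda>x::real. prob {\<omega> \<in> space M. trimmed_sum X n r \<omega> > x})
           \<sim>[at_top]
         (\<lambda>x::real. 2 powr (real (r+1) * frac (log 2 x)) / x ^ (r+1) * real (n choose (r+1)) *
            (1 + prob {\<omega> \<in> space M.
                   partial_sum X (n - r - 1) \<omega> > x * (1 - 2 powr (- frac (log 2 x)))}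
                 * (2 ^ (r+1) - 1))) \<and>
         (\<forall>\<delta>::real. 0 < \<delta> \<and> \<delta> < 1 \<longrightarrow>
           ((\<lambda>x::real. prob {\<omega> \<in> space M. trimmed_sum X n r \<omega> > x}
                 * x ^ (r+1) / 2 powr (real (r+1) * frac (log 2 x)))
            \<longlongrightarrow> real (n choose (r+1))) (at_top \<sqinter> principal {x. frac (log 2 x) > \<delta>}))"
    (is "?A \<and> ?B")
proof -
  define f where "f x = prob {\<omega> \<in> space M. trimmed_sum X n r \<omega> > x}" for x
  define R where "R x = 2 powr (real (r+1) * frac (log 2 x)) / x ^ (r+1) * real (n choose (r+1)) *
            (1 + prob {\<omega> \<in> space M.
                   partial_sum X (n - r - 1) \<omega> > x * (1 - 2 powr (- frac (log 2 x)))}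
                 * (2 ^ (r+1) - 1))" for x :: real
  define C where "C = real (n choose (r+1))"
  define c where "c = (2::real)^(r+1) - 1"
  define k0 where "k0 = n - (r+1)"
  define mm where "mm x = nat \<lfloor>log 2 x\<rfloor>" for x :: real
  define x0 where "x0 = (2::real)^(n+1)"
  have Cpos: "C > 0" unfolding C_def using rn by (simp add: zero_less_binomial)
  have c0: "c \<ge> 0" unfolding c_def using one_le_power[of "2::real" "r+1"] by simp
  have x0pos: "x0 > 0" unfolding x0_def by simp
  have mprops: "mm x \<ge> n+1" "2^(mm x) \<le> x" "x < 2^(mm x+1)"
    "x * (1 - 2 powr (- frac (log 2 x))) = x - 2^(mm x)" if "x \<ge> x0" for x
  proof -
    have h: "x \<ge> 2^(n+1)" using that x0_def by simp
    show "mm x \<ge> n+1" "2^(mm x) \<le> x" "x < 2^(mm x+1)" "x * (1 - 2 powr (- frac (log 2 x))) = x - 2^(mm x)"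
      unfolding mm_def using log_facts(1,2,3,5)[OF h] by auto
  qed
  have mp4: "2 powr (real (r+1) * frac (log 2 x)) = (x / 2^(mm x))^(r+1)" if "x \<ge> x0" for x
  proof -
    have h: "x \<ge> 2^(n+1)" using that x0_def by simp
    from log_facts(4)[OF h, of "r+1"] show ?thesis unfolding mm_def .
  qed
  have xpos: "x > 0" if "x \<ge> x0" for x using that x0pos by simp
  have Req: "R x = C * (1/2^(mm x))^(r+1) * (1 + c * pp (mm x) x)" if x: "x \<ge> x0" for x
  proof -
    have "2 powr (real (r+1) * frac (log 2 x)) / x ^ (r+1) = (1/2^(mm x))^(r+1)"
      using mp4[OF x] xpos[OF x] by (simp add: power_divide)
    moreover have "prob {\<omega> \<in> space M. partial_sum X (n - r - 1) \<omega> > x * (1 - 2 powr (- frac (log 2 x)))} = pp (mm x) x"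
      unfolding pp_def partial_sum_def mprops(4)[OF x] by (simp add: diff_diff_add)
    ultimately show ?thesis unfolding R_def C_def c_def by (simp add: algebra_simps)
  qed
  have fb: "\<bar>f x - C * (1/2^(mm x))^(r+1) * (1 + c * pp (mm x) x)\<bar> \<le> KK * (1/2^(mm x))^(r+2)" if x: "x \<ge> x0" for x
    using main_bound[OF mprops(1-3)[OF x]] unfolding f_def C_def c_def by simp
  have e2x: "1/2^(mm x) \<le> 2/x" if x: "x \<ge> x0" for x
  proof -
    have "x \<le> 2 * 2^(mm x)" using mprops(3)[OF x] by simp
    then show ?thesis using xpos[OF x] by (simp add: field_simps)
  qed
  have part1: ?A
  proof -
    have "((\<lambda>x. f x / R x) \<longlongrightarrow> 1) at_top"
    proof (rule lim_by_bound[where K="2 * KK / C"])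
      show "eventually (\<lambda>x. \<bar>f x / R x - 1\<bar> \<le> 2 * KK / C / x) at_top"
        using eventually_ge_at_top[of x0]
      proof eventually_elim
        case (elim x)
        define e where "e = 1/(2::real)^(mm x)"
        define p where "p = pp (mm x) x"
        have e0: "e > 0" unfolding e_def by simp
        have p0: "p \<ge> 0" unfolding p_def by (rule pp_nonneg)
        have Rx: "R x = C * e^(r+1) * (1 + c * p)" using Req[OF elim] unfolding e_def p_def .
        have pos: "0 \<le> C * e^(r+1)" using Cpos e0 by simp
        have "C * e^(r+1) * 1 \<le> C * e^(r+1) * (1 + c * p)" by (rule mult_left_mono) (use c0 p0 pos in auto)
        then have RC: "C * e^(r+1) \<le> R x" unfolding Rx by simp
        have Rpos: "R x > 0" using RC Cpos e0 by (smt (verit) zero_less_power mult_pos_pos)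
        have fR: "\<bar>f x - R x\<bar> \<le> KK * e^(r+2)" using fb[OF elim] Rx unfolding e_def p_def by simp
        have "\<bar>f x / R x - 1\<bar> = \<bar>f x - R x\<bar> / R x" using Rpos by (simp add: field_simps abs_div)
        also have "\<dots> \<le> KK * e^(r+2) / R x" using fR Rpos by (simp add: divide_right_mono)
        also have "\<dots> \<le> KK * e^(r+2) / (C * e^(r+1))"
          using RC Cpos e0 KK_nonneg Rpos by (intro divide_left_mono) (auto intro!: mult_pos_pos)
        also have "\<dots> = KK * e / C" using e0 Cpos by (simp add: field_simps)
        also have "\<dots> \<le> KK * (2/x) / C"
          using e2x[OF elim] KK_nonneg Cpos unfolding e_def by (intro divide_right_mono mult_left_mono) auto
        also have "\<dots> = 2 * KK / C / x" by (simp add: mult.commute)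
        finally show ?case .
      qed
    qed simp
    then show ?thesis unfolding f_def R_def by (rule asymp_equivI')
  qed
  have part2: ?B
  proof (intro allI impI)
    fix \<delta> :: real assume d: "0 < \<delta> \<and> \<delta> < 1"
    define \<beta> where "\<beta> = 1 - 2 powr (-\<delta>)"
    have \<beta>: "\<beta> > 0" unfolding \<beta>_def using d by (simp add: powr_minus field_simps)
    define F where "F = at_top \<sqinter> principal {x::real. frac (log 2 x) > \<delta>}"
    have "((\<lambda>x. f x * x ^ (r+1) / 2 powr (real (r+1) * frac (log 2 x))) \<longlongrightarrow> C) F"
    proof (rule lim_by_bound[where K="2 * KK + 2 * C * c * real k0 ^ 2 / \<beta>"])
      show "F \<le> at_top" unfolding F_def by simp
      show "eventually (\<lambda>x. \<bar>f x * x ^ (r+1) / 2 powr (real (r+1) * frac (log 2 x)) - C\<bar>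
              \<le> (2 * KK + 2 * C * c * real k0 ^ 2 / \<beta>) / x) F"
        unfolding F_def eventually_inf_principal using eventually_ge_at_top[of x0]
      proof eventually_elim
        case (elim x)
        show ?case
        proof
          assume fr: "x \<in> {x. frac (log 2 x) > \<delta>}"
          define e where "e = 1/(2::real)^(mm x)"
          define p where "p = pp (mm x) x"
          have e0: "e > 0" unfolding e_def by simp
          have xp: "x > 0" using xpos[OF elim] .
          have p0: "p \<ge> 0" unfolding p_def by (rule pp_nonneg)
          have g: "f x * x ^ (r+1) / 2 powr (real (r+1) * frac (log 2 x)) = f x / e^(r+1)"
            using mp4[OF elim] xp unfolding e_def by (simp add: power_divide field_simps)
          have fR: "\<bar>f x - C * e^(r+1) * (1 + c * p)\<bar> \<le> KK * e^(r+2)"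
            using fb[OF elim] unfolding e_def p_def by simp
          have b1: "\<bar>f x / e^(r+1) - C * (1 + c * p)\<bar> \<le> KK * e"
          proof -
            have "\<bar>f x / e^(r+1) - C * (1 + c * p)\<bar> = \<bar>f x - C * e^(r+1) * (1 + c * p)\<bar> / e^(r+1)"
              using e0 by (simp add: field_simps abs_div)
            also have "\<dots> \<le> KK * e^(r+2) / e^(r+1)" by (rule divide_right_mono) (use fR e0 in auto)
            also have "\<dots> = KK * e" using e0 by (simp add: field_simps)
            finally show ?thesis .
          qed
          have ypos: "x - 2^(mm x) \<ge> x * \<beta>"
          proof -
            have "2 powr (- frac (log 2 x)) \<le> 2 powr (-\<delta>)" using fr by simp
            then have "x * \<beta> \<le> x * (1 - 2 powr (- frac (log 2 x)))" unfolding \<beta>_def using xp by simp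
            then show ?thesis using mprops(4)[OF elim] by simp
          qed
          have xb: "x * \<beta> > 0" using xp \<beta> by simp
          have pb: "p \<le> 2 * real k0 ^ 2 / (x * \<beta>)"
          proof -
            have "p \<le> 2 * real (card {1..k0}) ^ 2 / (x - 2^(mm x))"
              unfolding p_def pp_def k0_def using sum_tail[of "{1..n-(r+1)}" "x - 2^(mm x)"] ypos xb by simp
            also have "\<dots> \<le> 2 * real k0 ^ 2 / (x * \<beta>)" using ypos xb by (simp add: frac_le)
            finally show ?thesis .
          qed
          have "\<bar>f x / e^(r+1) - C\<bar> \<le> KK * e + C * c * p"
          proof -
            have ccp: "0 \<le> C * (c * p)" using Cpos c0 p0 by simp
            show ?thesis using b1 ccp by (simp add: abs_le_iff algebra_simps)
          qed
          also have "\<dots> \<le> KK * (2/x) + C * c * (2 * real k0 ^ 2 / (x * \<beta>))"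
          proof (rule add_mono)
            show "KK * e \<le> KK * (2/x)" using e2x[OF elim] KK_nonneg unfolding e_def by (intro mult_left_mono) auto
            show "C * c * p \<le> C * c * (2 * real k0 ^ 2 / (x * \<beta>))"
              using pb Cpos c0 by (intro mult_left_mono) auto
          qed
          also have "\<dots> = (2 * KK + 2 * C * c * real k0 ^ 2 / \<beta>) / x" using xp \<beta> by (simp add: field_simps)
          finally show "\<bar>f x * x ^ (r+1) / 2 powr (real (r+1) * frac (log 2 x)) - C\<bar>
              \<le> (2 * KK + 2 * C * c * real k0 ^ 2 / \<beta>) / x" unfolding g .
        qed
      qed
    qed
    then show "((\<lambda>x::real. prob {\<omega> \<in> space M. trimmed_sum X n r \<omega> > x}
                 * x ^ (r+1) / 2 powr (real (r+1) * frac (log 2 x)))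
            \<longlongrightarrow> real (n choose (r+1))) (at_top \<sqinter> principal {x. frac (log 2 x) > \<delta>})"
      unfolding f_def C_def F_def .
  qed
  show ?thesis using part1 part2 by blast
qed

end

theorem theorem1:
  fixes M :: "'a measure" and X :: "nat \<Rightarrow> 'a \<Rightarrow> real" and n r :: nat
  assumes "prob_space M"
    and "\<And>i. i \<ge> 1 \<Longrightarrow> X i \<in> borel_measurable M"
    and "prob_space.indep_vars M (\<lambda>_. borel) X {1..}"
    and "\<And>i k. i \<ge> 1 \<Longrightarrow> k \<ge> 1 \<Longrightarrow>
           measure M {\<omega> \<in> space M. X i \<omega> = 2 ^ k} = 1 / 2 ^ k"
    and "r < n"
  shows "(\<lambda>x::real. measure M {\<omega> \<in> space M. trimmed_sum X n r \<omega> > x})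
           \<sim>[at_top]
         (\<lambda>x::real. 2 powr (real (r+1) * frac (log 2 x)) / x ^ (r+1) * real (n choose (r+1)) *
            (1 + measure M {\<omega> \<in> space M.
                   partial_sum X (n - r - 1) \<omega> > x * (1 - 2 powr (- frac (log 2 x)))}
                 * (2 ^ (r+1) - 1))) \<and>
         (\<forall>\<delta>::real. 0 < \<delta> \<and> \<delta> < 1 \<longrightarrow>
           ((\<lambda>x::real. measure M {\<omega> \<in> space M. trimmed_sum X n r \<omega> > x}
                 * x ^ (r+1) / 2 powr (real (r+1) * frac (log 2 x)))
            \<longlongrightarrow> real (n choose (r+1))) (at_top \<sqinter> principal {x. frac (log 2 x) > \<delta>}))"
proof -
  interpret prob_space M by (rule assms(1))
  interpret pw2 M X n r by (unfold_locales) (use assms in auto)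
  from final show ?thesis .
qed

end
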